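(* Let $a\in\mathbb{Q}\setminus\{-1,0,1\}$. For all $B\ge0$ and all sufficiently large $x$, \[ \sum_{\frac{\sqrt{x}}{(\log x)^B}<q^k\le x} \#\{ p\le x : \nu_p(a)=0,\ q^k \mid (p-1)/\mathrm{ord}_p(a) \}\ll_{a,B} \frac{x\log\log x}{(\log x)^2}, \] where the sum is over prime powers $q^k$ ($k\ge1$) in the stated range.
   Context: $p,q$ denote primes; $\nu_p(a)$ is the $p$-adic valuation of $a$; $\mathrm{ord}_p(a)$ is the multiplicative order of $a$ mod $p$. The result is unconditional. *)

theory Defs
  imports "HOL-Analysis.Analysis" "HOL-Number_Theory.Number_Theory"
begin

text \<open>p-adic valuation of a rational number a = n/d (in lowest terms, d > 0);
  by convention the valuation of 0 is 0 (irrelevant here since a \<noteq> 0).\<close>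
definition padic_val_rat :: "nat \<Rightarrow> rat \<Rightarrow> int" where
  "padic_val_rat p a = (let (n, d) = quotient_of a in
     int (multiplicity (int p) n) - int (multiplicity (int p) d))"

text \<open>Multiplicative order of a rational a = n/d modulo p (for p not dividing n d):
  least k \<ge> 1 with (n/d)^k \<equiv> 1 mod p, i.e. n^k \<equiv> d^k mod p.\<close>
definition ord_rat :: "nat \<Rightarrow> rat \<Rightarrow> nat" where
  "ord_rat p a = (let (n, d) = quotient_of a in
     (LEAST k::nat. k \<ge> 1 \<and> [n ^ k = d ^ k] (mod int p)))"

end

theory Submission
  imports Defs "HOL-Computational_Algebra.Squarefree" "HOL-Real_Asymp.Real_Asymp"
begin

definition dd :: "nat set \<Rightarrow> real" where "dd T = (\<Prod>l\<in>T. real l)"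
definition ph :: "nat set \<Rightarrow> real" where "ph T = (\<Prod>l\<in>T. real l - 1)"

lemma alt_pow_sum:
  assumes "finite C"
  shows "(\<Sum>V\<in>Pow C. (-1::real) ^ card V) = (if C = {} then 1 else 0)"
proof -
  have "(\<Prod>x\<in>C. (-1::real) + 1) = (\<Sum>V\<in>Pow C. (\<Prod>x\<in>V. -1) * (\<Prod>x\<in>C-V. 1))"
    by (rule prod_add[OF assms])
  also have "\<dots> = (\<Sum>V\<in>Pow C. (-1::real) ^ card V)"
    by (simp add: prod_constant)
  finally have e: "(\<Sum>V\<in>Pow C. (-1::real) ^ card V) = 0 ^ card C" by (simp add: prod_constant)
  have "card C > 0" if "C \<noteq> {}" using assms that by auto
  thus ?thesis using assms by (auto simp: e)
qed

lemma interval_alt_sum: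
  assumes "finite T" "U \<subseteq> T"
  shows "(\<Sum>S\<in>{S. U \<subseteq> S \<and> S \<subseteq> T}. (-1::real) ^ card (T - S)) = (if U = T then 1 else 0)"
proof -
  have "(\<Sum>S\<in>{S. U \<subseteq> S \<and> S \<subseteq> T}. (-1::real) ^ card (T - S)) = (\<Sum>V\<in>Pow (T - U). (-1::real) ^ card V)"
    by (rule sum.reindex_bij_witness[where i = "\<lambda>V. T - V" and j = "\<lambda>S. T - S"]) (use assms in auto)
  also have "\<dots> = (if U = T then 1 else 0)" using assms by (subst alt_pow_sum) auto
  finally show ?thesis .
qed

lemma dd_pos: "finite T \<Longrightarrow> \<forall>l\<in>T. l \<ge> 2 \<Longrightarrow> dd T > 0"
  unfolding dd_def by (rule prod_pos) auto

lemma ph_ge1: "finite T \<Longrightarrow> \<forall>l\<in>T. l \<ge> 2 \<Longrightarrow> ph T \<ge> 1"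
  unfolding ph_def by (rule prod_ge_1) auto

lemma dd_as_sum_ph:
  assumes "finite A"
  shows "dd A = (\<Sum>U\<in>Pow A. ph U)"
proof -
  have "dd A = (\<Prod>l\<in>A. (real l - 1) + 1)" unfolding dd_def by simp
  also have "\<dots> = (\<Sum>U\<in>Pow A. (\<Prod>l\<in>U. real l - 1) * (\<Prod>l\<in>A-U. 1))"
    by (rule prod_add[OF assms])
  finally show ?thesis by (simp add: ph_def)
qed

lemma selberg_weights:
  fixes TT :: "nat set set"
  assumes fin: "finite TT" and sets: "\<And>T. T \<in> TT \<Longrightarrow> finite T \<and> (\<forall>l\<in>T. l \<ge> 2)"
    and down: "\<And>T S. T \<in> TT \<Longrightarrow> S \<subseteq> T \<Longrightarrow> S \<in> TT" and emp: "{} \<in> TT"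
  shows "\<exists>lam. lam {} = 1 \<and>
     (\<Sum>S\<in>TT. \<Sum>T\<in>TT. lam S * lam T / dd (S \<union> T)) = 1 / (\<Sum>T\<in>TT. 1 / ph T) \<and>
     (\<forall>S\<in>TT. \<bar>lam S\<bar> \<le> dd S * card TT)"
proof -
  define G where "G = (\<Sum>T\<in>TT. 1 / ph T)"
  have php: "ph T \<ge> 1" if "T \<in> TT" for T using sets[OF that] ph_ge1 by blast
  have ddp: "dd T > 0" if "T \<in> TT" for T using sets[OF that] dd_pos by blast
  have nn: "0 \<le> 1 / ph T" if "T \<in> TT" for T using php[OF that] by simp
  have "G \<ge> 1 / ph {}" unfolding G_def
    by (rule member_le_sum) (use emp nn fin in auto)
  hence G1: "G \<ge> 1" by (simp add: ph_def)
  define y where "y T = (-1::real) ^ card T / (ph T * G)" for T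
  define lam where "lam S = dd S * (\<Sum>T\<in>{T\<in>TT. S \<subseteq> T}. (-1::real) ^ card (T - S) * y T)" for S
  have y_abs: "\<bar>y T\<bar> \<le> 1" if "T \<in> TT" for T
  proof -
    have "\<bar>y T\<bar> = 1 / (ph T * G)" using php[OF that] G1 by (simp add: y_def abs_mult)
    also have "\<dots> \<le> 1" using php[OF that] G1
      by (simp add: field_simps) (metis mult_mono' mult_1 zero_le_one)
    finally show ?thesis .
  qed
  have lam0: "lam {} = 1"
  proof -
    have "lam {} = (\<Sum>T\<in>TT. (-1::real) ^ card T * y T)"
      by (simp add: lam_def dd_def)
    also have "\<dots> = (\<Sum>T\<in>TT. 1 / ph T) / G"
      by (simp add: y_def sum_divide_distrib power_mult_distrib[symmetric] flip: power_add)
    also have "\<dots> = 1" using G1 by (simp add: G_def)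
    finally show ?thesis .
  qed
  have B: "(\<Sum>S\<in>{S\<in>TT. U \<subseteq> S}. lam S / dd S) = y U" if U: "U \<in> TT" for U
  proof -
    have "(\<Sum>S\<in>{S\<in>TT. U \<subseteq> S}. lam S / dd S) =
          (\<Sum>S\<in>{S\<in>TT. U \<subseteq> S}. \<Sum>T\<in>{T\<in>TT. S \<subseteq> T}. (-1::real) ^ card (T - S) * y T)"
    proof (intro sum.cong refl)
      fix S assume "S \<in> {S\<in>TT. U \<subseteq> S}"
      hence "dd S > 0" using ddp by auto
      thus "lam S / dd S = (\<Sum>T\<in>{T\<in>TT. S \<subseteq> T}. (-1::real) ^ card (T - S) * y T)"
        by (simp add: lam_def)
    qed
    also have "\<dots> = (\<Sum>T\<in>TT. \<Sum>S\<in>{S\<in>{S\<in>TT. U \<subseteq> S}. S \<subseteq> T}. (-1::real) ^ card (T - S) * y T)"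
      using fin by (subst sum.swap_restrict) auto
    also have "\<dots> = (\<Sum>T\<in>TT. if T = U then y U else 0)"
    proof (intro sum.cong refl)
      fix T assume T: "T \<in> TT"
      show "(\<Sum>S\<in>{S\<in>{S\<in>TT. U \<subseteq> S}. S \<subseteq> T}. (-1::real) ^ card (T - S) * y T) = (if T = U then y U else 0)"
      proof (cases "U \<subseteq> T")
        case True
        have "{S\<in>{S\<in>TT. U \<subseteq> S}. S \<subseteq> T} = {S. U \<subseteq> S \<and> S \<subseteq> T}" using down[OF T] by auto
        hence "(\<Sum>S\<in>{S\<in>{S\<in>TT. U \<subseteq> S}. S \<subseteq> T}. (-1::real) ^ card (T - S) * y T)
             = (\<Sum>S\<in>{S. U \<subseteq> S \<and> S \<subseteq> T}. (-1::real) ^ card (T - S)) * y T"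
          by (simp add: sum_distrib_right)
        also have "\<dots> = (if U = T then 1 else 0) * y T"
          using sets[OF T] True by (subst interval_alt_sum) auto
        finally show ?thesis by auto
      next
        case False
        hence e: "{S\<in>{S\<in>TT. U \<subseteq> S}. S \<subseteq> T} = {}" by auto
        have "T \<noteq> U" using False by auto
        thus ?thesis unfolding e by simp
      qed
    qed
    also have "\<dots> = y U" using U fin by (simp add: sum.delta')
    finally show ?thesis .
  qed
  have Q: "(\<Sum>S\<in>TT. \<Sum>T\<in>TT. lam S * lam T / dd (S \<union> T)) = 1 / G"
  proof -
    have eq1: "lam S * lam T / dd (S \<union> T) =
       (\<Sum>U\<in>TT. if U \<subseteq> S \<and> U \<subseteq> T then ph U * (lam S / dd S) * (lam T / dd T) else 0)"
      if S: "S \<in> TT" and T: "T \<in> TT" for S T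
    proof -
      have fS: "finite S" and fT: "finite T" using sets S T by auto
      have "dd (S \<union> T) * dd (S \<inter> T) = dd S * dd T"
        unfolding dd_def using fS fT by (rule prod.union_inter)
      moreover have "dd (S \<inter> T) = (\<Sum>U\<in>Pow (S \<inter> T). ph U)"
        using fS by (intro dd_as_sum_ph) auto
      moreover have "(\<Sum>U\<in>Pow (S \<inter> T). ph U) = (\<Sum>U\<in>TT. if U \<subseteq> S \<and> U \<subseteq> T then ph U else 0)"
        using fin by (subst sum.If_cases) (auto intro!: sum.cong dest: down[OF S])
      moreover have "dd S > 0" "dd T > 0" using ddp S T by auto
      moreover have "dd (S \<union> T) > 0" using sets[OF S] sets[OF T] by (intro dd_pos) auto
      ultimately have "1 / dd (S \<union> T) = (\<Sum>U\<in>TT. if U \<subseteq> S \<and> U \<subseteq> T then ph U else 0) / (dd S * dd T)"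
        by (simp add: field_simps)
      note h = this
      have "lam S * lam T / dd (S \<union> T) = lam S * lam T * (1 / dd (S \<union> T))" by simp
      also have "\<dots> = lam S * lam T * ((\<Sum>U\<in>TT. if U \<subseteq> S \<and> U \<subseteq> T then ph U else 0) / (dd S * dd T))"
        by (simp only: h)
      also have "\<dots> = (lam S / dd S) * (lam T / dd T) * (\<Sum>U\<in>TT. if U \<subseteq> S \<and> U \<subseteq> T then ph U else 0)"
        by simp
      also have "\<dots> = (\<Sum>U\<in>TT. if U \<subseteq> S \<and> U \<subseteq> T then ph U * (lam S / dd S) * (lam T / dd T) else 0)"
        by (subst sum_distrib_left) (auto intro!: sum.cong)
      finally show ?thesis .
    qed
    have "(\<Sum>S\<in>TT. \<Sum>T\<in>TT. lam S * lam T / dd (S \<union> T)) =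
       (\<Sum>S\<in>TT. \<Sum>T\<in>TT. \<Sum>U\<in>TT. if U \<subseteq> S \<and> U \<subseteq> T then ph U * (lam S / dd S) * (lam T / dd T) else 0)"
      using eq1 by (auto intro!: sum.cong)
    also have "\<dots> = (\<Sum>U\<in>TT. \<Sum>S\<in>TT. \<Sum>T\<in>TT. if U \<subseteq> S \<and> U \<subseteq> T then ph U * (lam S / dd S) * (lam T / dd T) else 0)"
      by (subst sum.swap) (subst (2) sum.swap, rule refl)
    also have "\<dots> = (\<Sum>U\<in>TT. ph U * (\<Sum>S\<in>{S\<in>TT. U \<subseteq> S}. lam S / dd S) * (\<Sum>T\<in>{T\<in>TT. U \<subseteq> T}. lam T / dd T))"
    proof (intro sum.cong refl)
      fix U
      have "(\<Sum>S\<in>TT. \<Sum>T\<in>TT. if U \<subseteq> S \<and> U \<subseteq> T then ph U * (lam S / dd S) * (lam T / dd T) else 0)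
          = (\<Sum>S\<in>TT. if U \<subseteq> S then ph U * (lam S / dd S) * (\<Sum>T\<in>{T\<in>TT. U \<subseteq> T}. lam T / dd T) else 0)"
      proof (intro sum.cong refl)
        fix S assume "S \<in> TT"
        have e: "TT \<inter> Collect ((\<subseteq>) U) = {T \<in> TT. U \<subseteq> T}" by auto
        show "(\<Sum>T\<in>TT. if U \<subseteq> S \<and> U \<subseteq> T then ph U * (lam S / dd S) * (lam T / dd T) else 0) =
          (if U \<subseteq> S then ph U * (lam S / dd S) * (\<Sum>T\<in>{T\<in>TT. U \<subseteq> T}. lam T / dd T) else 0)"
          using fin by (simp add: sum_distrib_left sum.If_cases e)
      qed
      also have "\<dots> = (\<Sum>S\<in>{S\<in>TT. U \<subseteq> S}. ph U * (lam S / dd S) * (\<Sum>T\<in>{T\<in>TT. U \<subseteq> T}. lam T / dd T))"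
      proof -
        have e: "TT \<inter> Collect ((\<subseteq>) U) = {T \<in> TT. U \<subseteq> T}" by auto
        show ?thesis using fin by (simp only: sum.If_cases e) simp
      qed
      also have "\<dots> = ph U * (\<Sum>S\<in>{S\<in>TT. U \<subseteq> S}. lam S / dd S) * (\<Sum>T\<in>{T\<in>TT. U \<subseteq> T}. lam T / dd T)"
        by (simp only: sum_distrib_left sum_distrib_right, rule sum.swap)
      finally show "(\<Sum>S\<in>TT. \<Sum>T\<in>TT. if U \<subseteq> S \<and> U \<subseteq> T then ph U * (lam S / dd S) * (lam T / dd T) else 0)
          = ph U * (\<Sum>S\<in>{S\<in>TT. U \<subseteq> S}. lam S / dd S) * (\<Sum>T\<in>{T\<in>TT. U \<subseteq> T}. lam T / dd T)" .
    qed
    also have "\<dots> = (\<Sum>U\<in>TT. ph U * y U * y U)"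
      by (intro sum.cong refl) (simp add: B)
    also have "\<dots> = (\<Sum>U\<in>TT. 1 / ph U) / G / G"
    proof -
      have "ph U * y U * y U = 1 / ph U / G / G" if "U \<in> TT" for U
      proof -
        have "ph U * y U * y U = ((-1)^card U * (-1)^card U) / (ph U * G * G)"
          using php[OF that] G1 by (simp add: y_def field_simps)
        also have "(-1::real)^card U * (-1)^card U = 1" by (simp flip: power_add)
        finally show ?thesis by (simp add: field_simps)
      qed
      thus ?thesis by (simp add: sum_divide_distrib)
    qed
    also have "\<dots> = 1 / G" using G1 by (simp add: G_def)
    finally show ?thesis .
  qed
  have D: "\<bar>lam S\<bar> \<le> dd S * card TT" if S: "S \<in> TT" for S
  proof -
    have "\<bar>lam S\<bar> = dd S * \<bar>\<Sum>T\<in>{T\<in>TT. S \<subseteq> T}. (-1::real) ^ card (T - S) * y T\<bar>"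
      using ddp[OF S] by (simp add: lam_def abs_mult)
    also have "\<bar>\<Sum>T\<in>{T\<in>TT. S \<subseteq> T}. (-1::real) ^ card (T - S) * y T\<bar> \<le> (\<Sum>T\<in>{T\<in>TT. S \<subseteq> T}. 1)"
      by (rule order.trans[OF sum_abs]) (intro sum_mono, simp add: abs_mult y_abs)
    also have "\<dots> \<le> card TT" using fin by (simp add: card_mono)
    finally show ?thesis using ddp[OF S] by (simp add: mult_left_mono)
  qed
  show ?thesis using lam0 Q D unfolding G_def by blast
qed

lemma prodset_dvd_iff:
  fixes T :: "nat set"
  assumes "finite T" "\<forall>l\<in>T. prime l"
  shows "(\<Prod>T) dvd n \<longleftrightarrow> (\<forall>l\<in>T. l dvd n)"
  using assms
proof (induction T rule: finite_induct)
  case (insert a T)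
  have "\<not> a dvd \<Prod>T"
  proof
    assume "a dvd \<Prod>T"
    then obtain b where "b \<in> T" "a dvd b" using insert by (auto simp: prime_dvd_prod_iff)
    hence "a = b" using insert by (auto simp: primes_dvd_imp_eq)
    thus False using insert \<open>b \<in> T\<close> by auto
  qed
  hence cop: "coprime a (\<Prod>T)" using insert by (auto intro: prime_imp_coprime)
  have "(a * \<Prod>T) dvd n \<longleftrightarrow> a dvd n \<and> (\<Prod>T) dvd n"
    using cop by (metis divides_mult dvd_mult_left dvd_mult_right)
  moreover have IH: "\<Prod>T dvd n \<longleftrightarrow> (\<forall>l\<in>T. l dvd n)" using insert.IH insert.prems by simp
  moreover have "\<Prod>(insert a T) = a * \<Prod>T" using insert.hyps by simp
  ultimately show ?case by simp
qed simp

lemma prodset_mem_iff: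
  fixes T :: "nat set"
  assumes "finite T" "\<forall>l\<in>T. prime l" "prime l"
  shows "l dvd \<Prod>T \<longleftrightarrow> l \<in> T"
proof
  assume "l dvd \<Prod>T"
  then obtain b where "b \<in> T" "l dvd b" using assms by (auto simp: prime_dvd_prod_iff)
  moreover have "l = b" using assms \<open>b \<in> T\<close> \<open>l dvd b\<close> by (metis primes_dvd_imp_eq)
  ultimately show "l \<in> T" by simp
next
  assume "l \<in> T"
  thus "l dvd \<Prod>T" using assms(1) by (rule dvd_prodI[where f = "\<lambda>x. x", simplified, rotated])
qed

lemma prodset_inj:
  fixes S T :: "nat set"
  assumes "finite S" "\<forall>l\<in>S. prime l" "finite T" "\<forall>l\<in>T. prime l" "\<Prod>S = \<Prod>T"
  shows "S = T"
proof -
  have "l \<in> S \<longleftrightarrow> l \<in> T" for l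
  proof (cases "prime l")
    case True
    thus ?thesis using assms prodset_mem_iff[of S l] prodset_mem_iff[of T l] by simp
  next
    case False
    thus ?thesis using assms by metis
  qed
  thus ?thesis by blast
qed

lemma decomp_sq:
  fixes n q :: nat
  assumes "prime q" "n \<ge> 1"
  shows "\<exists>i s T. finite T \<and> (\<forall>l\<in>T. prime l \<and> l \<noteq> q) \<and> s \<ge> 1 \<and> n = q ^ i * s ^ 2 * \<Prod>T"
  using assms(2)
proof (induction n rule: less_induct)
  case (less n)
  have n0: "n \<noteq> 0" using less.prems by auto
  show ?case
  proof (cases "q dvd n")
    case True
    then obtain n' where n': "n = q * n'" by blast
    have q1: "q > 1" using prime_gt_1_nat[OF assms(1)] .
    have "n' \<noteq> 0" using n0 n' by auto
    hence a1: "n' \<ge> 1" by simp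
    have a2: "n' < n" using n' q1 a1 by simp
    obtain i s T where h: "finite T" "\<forall>l\<in>T. prime l \<and> l \<noteq> q" "s \<ge> 1" "n' = q ^ i * s ^ 2 * \<Prod>T"
      using less.IH[OF a2 a1] by blast
    have "n = q ^ Suc i * s ^ 2 * \<Prod>T" using n' h(4) by simp
    thus ?thesis using h(1-3) by blast
  next
    case nq: False
    show ?thesis
    proof (cases "squarefree n")
      case True
      have "n = (\<Prod>p\<in>prime_factors n. p ^ multiplicity p n)"
        using n0 by (intro prime_factorization_nat) simp
      also have "\<dots> = (\<Prod>p\<in>prime_factors n. p)"
        using True n0 by (intro prod.cong refl) (auto simp: squarefree_factorial_semiring')
      finally have e: "n = q ^ 0 * 1 ^ 2 * \<Prod>(prime_factors n)" by simp
      have "\<forall>l\<in>prime_factors n. prime l \<and> l \<noteq> q" using nq by (auto dest: in_prime_factors_imp_dvd)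
      moreover have "finite (prime_factors n)" by simp
      ultimately show ?thesis using e by (metis le_refl)
    next
      case False
      then obtain p where p: "prime p" "p ^ 2 dvd n" using n0 squarefree_factorial_semiring by blast
      then obtain n' where n': "n = p ^ 2 * n'" by blast
      have p1: "p ^ 2 > 1" using prime_gt_1_nat[OF p(1)] by (metis one_less_power zero_less_numeral)
      have "n' \<noteq> 0" using n0 n' by auto
      hence a1: "n' \<ge> 1" by simp
      have a2: "n' < n" using n' p1 a1 by simp
      obtain i s T where h: "finite T" "\<forall>l\<in>T. prime l \<and> l \<noteq> q" "s \<ge> 1" "n' = q ^ i * s ^ 2 * \<Prod>T"
        using less.IH[OF a2 a1] by blast
      have "n = q ^ i * (p * s) ^ 2 * \<Prod>T" using n' h(4) by (simp add: power_mult_distrib)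
      moreover have "p * s \<ge> 1" using h(3) prime_gt_0_nat[OF p(1)] by simp
      ultimately show ?thesis using h(1-2) by blast
    qed
  qed
qed


lemma residue_count:
  fixes M m r :: nat
  assumes "m \<ge> 1" "r < m"
  shows "real (card {t\<in>{1..M}. t mod m = r}) \<le> real M / m + 1"
    and "real (card {t\<in>{1..M}. t mod m = r}) \<ge> real M / m - 2"
proof -
  let ?A = "{t\<in>{1..M}. t mod m = r}"
  have inj: "inj_on (\<lambda>t. t div m) ?A"
  proof (rule inj_onI)
    fix s t assume st: "s \<in> ?A" "t \<in> ?A" "s div m = t div m"
    have "s = s div m * m + s mod m" by simp
    also have "\<dots> = t div m * m + t mod m" using st by simp
    also have "\<dots> = t" by simp
    finally show "s = t" .
  qed
  have cA: "card ?A = card ((\<lambda>t. t div m) ` ?A)" using inj by (simp add: card_image)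
  have "(\<lambda>t. t div m) ` ?A \<subseteq> {0..M div m}" by (auto intro: div_le_mono)
  hence "card ((\<lambda>t. t div m) ` ?A) \<le> card {0..M div m}" by (intro card_mono) simp_all
  hence "card ?A \<le> Suc (M div m)" using cA by simp
  moreover have "real (M div m) \<le> real M / m" by (rule of_nat_div_le_of_nat)
  ultimately show "real (card ?A) \<le> real M / m + 1" by linarith
  have "{1..M div m - 1} \<subseteq> (\<lambda>t. t div m) ` ?A"
  proof
    fix j assume j: "j \<in> {1..M div m - 1}"
    have "j * m + r \<le> (M div m - 1) * m + (m - 1)" using j assms by (intro add_mono) auto
    also have "\<dots> < (M div m) * m" using j assms by (cases "M div m") (auto simp: algebra_simps)
    also have "\<dots> \<le> M" by simp
    finally have h1: "j * m + r \<le> M" by simp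
    have h2: "1 \<le> j * m" using j assms by simp
    have h3: "(j * m + r) mod m = r" using assms by simp
    have h4: "1 \<le> j * m + r" using h2 by linarith
    have inA: "j * m + r \<in> ?A" using h1 h3 h4 by simp
    have dj: "(j * m + r) div m = j"
    proof -
      have "(r + j * m) div m = j + r div m" using assms(1) by (intro div_mult_self1) simp
      moreover have "r div m = 0" using assms(2) by (rule div_less)
      ultimately show ?thesis by (simp add: add.commute)
    qed
    show "j \<in> (\<lambda>t. t div m) ` ?A" by (rule image_eqI[where f = "\<lambda>t. t div m", OF dj[symmetric] inA])
  qed
  hence "card {1..M div m - 1} \<le> card ((\<lambda>t. t div m) ` ?A)" by (intro card_mono) simp_all
  hence "M div m - 1 \<le> card ?A" using cA by simp
  moreover have "real M / m - 1 \<le> real (M div m)"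
  proof -
    have "real M = real (M div m) * m + real (M mod m)" by (metis of_nat_add of_nat_mult div_mult_mod_eq)
    moreover have "real (M mod m) < m" using assms by simp
    ultimately show ?thesis using assms by (simp add: field_simps)
  qed
  ultimately show "real (card ?A) \<ge> real M / m - 2" by linarith
qed

lemma ap_dvd_count:
  fixes m l :: nat and x :: real
  assumes "m \<ge> 1" "l \<ge> 1" "coprime l m" "x \<ge> 0"
  shows "\<bar>real (card {n\<in>{1..nat \<lfloor>x\<rfloor>}. [n = 1] (mod m) \<and> l dvd n}) - x / (m * l)\<bar> \<le> 4"
proof -
  define N where "N = nat \<lfloor>x\<rfloor>"
  define M where "M = N div l"
  obtain c where c: "[l * c = 1] (mod m)" using cong_solve_coprime_nat[OF assms(3)] by auto
  define r where "r = c mod m"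
  have r: "r < m" using assms by (simp add: r_def)
  have key: "[l * t = 1] (mod m) \<longleftrightarrow> t mod m = r" for t
  proof
    assume h: "[l * t = 1] (mod m)"
    have "[c * (l * t) = c * 1] (mod m)" using h by (rule cong_scalar_left)
    moreover have "[c * (l * t) = t] (mod m)"
      using cong_scalar_right[OF c, of t] by (simp add: mult.commute mult.left_commute)
    ultimately have "[t = c] (mod m)" by (metis cong_sym cong_trans mult_1_right)
    thus "t mod m = r" by (simp add: r_def cong_def)
  next
    assume "t mod m = r"
    hence "[t = c] (mod m)" by (simp add: r_def cong_def)
    hence "[l * t = l * c] (mod m)" by (rule cong_scalar_left)
    thus "[l * t = 1] (mod m)" using c by (rule cong_trans)
  qed
  have eq: "{n\<in>{1..N}. [n = 1] (mod m) \<and> l dvd n} = (\<lambda>t. l * t) ` {t\<in>{1..M}. t mod m = r}"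
  proof (intro equalityI subsetI)
    fix n assume n: "n \<in> {n\<in>{1..N}. [n = 1] (mod m) \<and> l dvd n}"
    then obtain t where t: "n = l * t" by auto
    have "t \<ge> 1" using n t by (cases t) auto
    moreover have "t \<le> M"
    proof -
      have "t * l \<le> N" using n t by (simp add: mult.commute)
      thus ?thesis unfolding M_def using assms by (simp add: less_eq_div_iff_mult_less_eq)
    qed
    moreover have "t mod m = r" using n t key by auto
    ultimately show "n \<in> (\<lambda>t. l * t) ` {t\<in>{1..M}. t mod m = r}" using t by auto
  next
    fix n assume "n \<in> (\<lambda>t. l * t) ` {t\<in>{1..M}. t mod m = r}"
    then obtain t where t: "n = l * t" "t \<in> {1..M}" "t mod m = r" by auto
    have "l * t \<le> l * M" using t by simp
    also have "\<dots> \<le> N" unfolding M_def by simp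
    finally show "n \<in> {n\<in>{1..N}. [n = 1] (mod m) \<and> l dvd n}" using t key assms by auto
  qed
  have "inj_on (\<lambda>t. l * t) {t\<in>{1..M}. t mod m = r}" by (rule inj_onI) (use assms in simp)
  hence cardeq: "card {n\<in>{1..N}. [n = 1] (mod m) \<and> l dvd n} = card {t\<in>{1..M}. t mod m = r}"
    unfolding eq by (rule card_image)
  have N1: "real N \<le> x" "real N \<ge> x - 1" using assms unfolding N_def by linarith+
  have M1: "real M \<le> real N / l" "real M \<ge> real N / l - 1"
  proof -
    show "real M \<le> real N / l" unfolding M_def by (rule of_nat_div_le_of_nat)
    have "real N = real M * l + real (N mod l)" unfolding M_def by (metis of_nat_add of_nat_mult div_mult_mod_eq)
    moreover have "real (N mod l) < l" using assms by simp
    ultimately show "real M \<ge> real N / l - 1" using assms by (simp add: field_simps)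
  qed
  have ml: "real m \<ge> 1" "real l \<ge> 1" using assms by auto
  have "real M / m \<le> x / (m * l)"
  proof -
    have "real M \<le> x / l" using M1 N1 ml by (smt (verit) divide_right_mono)
    thus ?thesis using ml by (simp add: divide_right_mono field_simps)
  qed
  moreover have "real M / m \<ge> x / (m * l) - 2"
  proof -
    have a: "(x - 1) / l \<le> real N / l" using N1 ml by (intro divide_right_mono) auto
    have b: "1 / real l \<le> 1" using ml by simp
    have "(x - 1) / l = x / l - 1 / l" by (simp add: diff_divide_distrib)
    hence "real M \<ge> x / l - 2" using M1 a b by linarith
    hence "real M / m \<ge> (x / l - 2) / m" using ml by (simp add: divide_right_mono)
    moreover have "(x / l - 2) / m \<ge> x / (m * l) - 2" using ml
    proof -
      have "(x / l - 2) / m = x / (m * l) - 2 / m" using ml by (simp add: field_simps)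
      moreover have "2 / real m \<le> 2" using ml by (simp add: field_simps)
      ultimately show ?thesis by linarith
    qed
    ultimately show ?thesis by linarith
  qed
  moreover note residue_count[OF assms(1) r, of M]
  ultimately have fin: "\<bar>real (card {t\<in>{1..M}. t mod m = r}) - x / (real m * real l)\<bar> \<le> 4"
    unfolding of_nat_mult by (simp only: abs_le_iff) linarith
  have c: "real (card {n\<in>{1..nat \<lfloor>x\<rfloor>}. [n = 1] (mod m) \<and> l dvd n}) = real (card {t\<in>{1..M}. t mod m = r})"
    using cardeq unfolding N_def by (rule arg_cong)
  show ?thesis unfolding c of_nat_mult using fin .
qed

lemma inv_sq_sum: "N \<ge> 1 \<Longrightarrow> (\<Sum>s\<in>{1..N}. 1 / (real s)^2) \<le> 2 - 1 / real N"
proof (induction N rule: dec_induct)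
  case base
  then show ?case by simp
next
  case (step n)
  have n: "real n \<ge> 1" using step by simp
  have "(\<Sum>s\<in>{1..Suc n}. 1 / (real s)^2) = (\<Sum>s\<in>{1..n}. 1 / (real s)^2) + 1 / (real n + 1)^2"
    by (simp add: add.commute)
  also have "\<dots> \<le> 2 - 1 / real n + 1 / (real n + 1)^2" using step.IH by simp
  also have "\<dots> \<le> 2 - 1 / (real n + 1)"
  proof -
    have "1 / (real n + 1)^2 \<le> 1 / (real n * (real n + 1))"
      using n by (intro divide_left_mono) (auto simp: power2_eq_square intro!: mult_right_mono)
    also have "\<dots> = 1 / real n - 1 / (real n + 1)" using n by (simp add: field_simps)
    finally show ?thesis by simp
  qed
  finally show ?case by (simp add: add.commute)
qed

lemma geom_half: "prime (q::nat) \<Longrightarrow> (\<Sum>i<Z. (1 / real q)^i) \<le> 2"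
proof -
  assume q: "prime q"
  have q2: "real q \<ge> 2" using prime_ge_2_nat[OF q] by simp
  define y where "y = 1 / real q"
  have y: "y > 0" "y \<le> 1/2" using q2 by (auto simp: y_def field_simps)
  have "(\<Sum>i<Z. y^i) = (1 - y^Z) / (1 - y)" using y by (subst sum_gp_strict) auto
  also have "\<dots> \<le> 1 / (1 - y)" using y by (intro divide_right_mono) auto
  also have "\<dots> \<le> 2" using y by (simp add: field_simps)
  finally show ?thesis by (simp add: y_def)
qed

lemma prodset_ge1: "finite T \<Longrightarrow> \<forall>l\<in>T. prime (l::nat) \<Longrightarrow> \<Prod>T \<ge> 1"
  by (metis One_nat_def Suc_leI prime_gt_0_nat prod_pos)

lemma prodset_subset_le:
  fixes S T :: "nat set"
  assumes "finite T" "\<forall>l\<in>T. prime l" "S \<subseteq> T"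
  shows "\<Prod>S \<le> \<Prod>T"
proof -
  have "\<Prod>T = \<Prod>S * \<Prod>(T - S)" using assms by (metis prod.subset_diff mult.commute)
  moreover have "\<Prod>(T - S) \<ge> 1" using assms by (intro prodset_ge1) auto
  ultimately show ?thesis by simp
qed

lemma dd_eq: "dd T = real (\<Prod>T)" by (simp add: dd_def)

lemma G_lower:
  fixes q :: nat and z :: real
  assumes q: "prime q" and z: "z \<ge> 1"
  defines "PP \<equiv> {l. prime l \<and> real l \<le> z \<and> l \<noteq> q}"
  defines "TT \<equiv> {T. T \<subseteq> PP \<and> real (\<Prod>T) \<le> z}"
  shows "(\<Sum>T\<in>TT. 1 / ph T) \<ge> ln z / 4"
proof -
  define Z where "Z = nat \<lfloor>z\<rfloor>"
  have Zz: "real Z \<le> z" "z < real Z + 1" using z unfolding Z_def by linarith+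
  have finPP: "finite PP" unfolding PP_def
    by (rule finite_subset[of _ "{..Z}"]) (auto simp: Z_def le_nat_floor)
  have finTT: "finite TT" unfolding TT_def by (rule finite_subset[of _ "Pow PP"]) (use finPP in auto)
  have TTprop: "finite T \<and> (\<forall>l\<in>T. prime l \<and> l \<noteq> q)" if "T \<in> TT" for T
    using that finPP unfolding TT_def PP_def by (auto intro: finite_subset)
  have "ln z \<le> ln (real Z + 1)" using z Zz by simp
  also have "\<dots> \<le> harm Z" by (rule ln_le_harm)
  also have "harm Z = (\<Sum>n\<in>{1..Z}. 1 / real n)" by (simp add: harm_def field_simps)
  finally have h1: "ln z \<le> (\<Sum>n\<in>{1..Z}. 1 / real n)" .
  define f where "f = (\<lambda>(i, s, T). q ^ i * s ^ 2 * \<Prod>T)"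
  define D where "D = {..<Z} \<times> ({1..Z} \<times> TT)"
  have finD: "finite D" unfolding D_def using finTT by auto
  have sub: "{1..Z} \<subseteq> f ` D"
  proof
    fix n assume n: "n \<in> {1..Z}"
    obtain i s T where ist: "finite T" "\<forall>l\<in>T. prime l \<and> l \<noteq> q" "s \<ge> 1" "n = q ^ i * s ^ 2 * \<Prod>T"
      using decomp_sq[OF q, of n] n by auto
    have P1: "\<Prod>T \<ge> 1" using ist by (intro prodset_ge1) auto
    have qi1: "q ^ i \<ge> 1" using prime_gt_0_nat[OF q] by (simp add: Suc_le_eq)
    have s1: "s ^ 2 \<ge> 1" using ist by simp
    have "n \<le> Z" using n by simp
    have le1: "q ^ i \<le> n" using ist(4) P1 s1 by (metis dvd_imp_le dvd_mult2 dvd_triv_left n atLeastAtMost_iff not_one_le_zero neq0_conv)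
    have le2: "s ^ 2 \<le> n" using ist(4) P1 qi1 by (metis dvd_imp_le dvd_mult2 dvd_triv_right n atLeastAtMost_iff not_one_le_zero neq0_conv)
    have le3: "\<Prod>T \<le> n" using ist(4) by (metis dvd_imp_le dvd_triv_right n atLeastAtMost_iff not_one_le_zero neq0_conv)
    have "i < 2 ^ i" by (rule less_exp)
    also have "2 ^ i \<le> q ^ i" using prime_ge_2_nat[OF q] by (rule power_mono) simp
    finally have iZ: "i < Z" using le1 \<open>n \<le> Z\<close> by linarith
    have "s \<le> s ^ 2" using ist(3) by (simp add: power2_eq_square)
    hence sZ: "s \<le> Z" using le2 \<open>n \<le> Z\<close> by linarith
    have PZ: "real (\<Prod>T) \<le> z" using le3 \<open>n \<le> Z\<close> Zz by linarith
    have "T \<subseteq> PP"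
    proof
      fix l assume l: "l \<in> T"
      have "l dvd \<Prod>T" using l ist(1) by (rule dvd_prodI[where f = "\<lambda>x. x", simplified, rotated])
      hence "l \<le> \<Prod>T" using P1 by (intro dvd_imp_le) auto
      hence "real l \<le> real (\<Prod>T)" by (simp only: of_nat_le_iff)
      hence "real l \<le> z" using PZ by linarith
      thus "l \<in> PP" using ist l unfolding PP_def by auto
    qed
    hence "(i, s, T) \<in> D" unfolding D_def TT_def using iZ sZ ist PZ by auto
    moreover have "n = f (i, s, T)" using ist by (simp add: f_def)
    ultimately show "n \<in> f ` D" by blast
  qed
  have "(\<Sum>n\<in>{1..Z}. 1 / real n) \<le> (\<Sum>n\<in>f ` D. 1 / real n)"
    using sub finD by (intro sum_mono2) auto
  also have "\<dots> \<le> (\<Sum>x\<in>D. 1 / real (f x))"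
    using sum_image_le[OF finD, of "\<lambda>n. 1 / real n" f] by (simp add: o_def)
  also have "\<dots> = (\<Sum>i<Z. \<Sum>s\<in>{1..Z}. \<Sum>T\<in>TT. (1 / real q)^i * (1 / (real s)^2) * (1 / dd T))"
  proof -
    have "(\<Sum>x\<in>D. 1 / real (f x)) = (\<Sum>(i,s,T)\<in>D. (1 / real q)^i * (1 / (real s)^2) * (1 / dd T))"
      by (intro sum.cong refl) (auto simp: f_def dd_eq power_divide split: prod.splits)
    also have "\<dots> = (\<Sum>i<Z. \<Sum>s\<in>{1..Z}. \<Sum>T\<in>TT. (1 / real q)^i * (1 / (real s)^2) * (1 / dd T))"
      unfolding D_def by (simp add: sum.cartesian_product)
    finally show ?thesis .
  qed
  also have "\<dots> = (\<Sum>i<Z. (1 / real q)^i) * ((\<Sum>s\<in>{1..Z}. 1 / (real s)^2) * (\<Sum>T\<in>TT. 1 / dd T))"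
  proof -
    have e1: "(\<Sum>s\<in>{1..Z}. 1 / (real s)^2) * (\<Sum>T\<in>TT. 1 / dd T) = (\<Sum>s\<in>{1..Z}. \<Sum>T\<in>TT. 1 / (real s)^2 * (1 / dd T))"
      by (rule sum_product)
    have e2: "(\<Sum>i<Z. (1 / real q)^i) * (\<Sum>s\<in>{1..Z}. \<Sum>T\<in>TT. 1 / (real s)^2 * (1 / dd T)) =
      (\<Sum>i<Z. \<Sum>s\<in>{1..Z}. \<Sum>T\<in>TT. (1 / real q)^i * (1 / (real s)^2 * (1 / dd T)))"
      by (simp only: sum_distrib_right, simp only: sum_distrib_left)
    show ?thesis unfolding e1 e2 by (simp only: mult.assoc)
  qed
  also have "\<dots> \<le> 2 * (2 * (\<Sum>T\<in>TT. 1 / ph T))"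
  proof -
    have a: "(\<Sum>i<Z. (1 / real q)^i) \<le> 2" using q by (rule geom_half)
    have b: "(\<Sum>s\<in>{1..Z}. 1 / (real s)^2) \<le> 2"
    proof (cases "Z \<ge> 1")
      case True
      thus ?thesis using inv_sq_sum[OF True] by (smt (verit) divide_nonneg_nonneg of_nat_0_le_iff)
    qed simp
    have c: "(\<Sum>T\<in>TT. 1 / dd T) \<le> (\<Sum>T\<in>TT. 1 / ph T)"
    proof (intro sum_mono)
      fix T assume T: "T \<in> TT"
      have fT: "finite T" and pT: "\<forall>l\<in>T. l \<ge> 2" using TTprop[OF T] prime_ge_2_nat by auto
      have "ph T \<le> dd T" unfolding ph_def dd_def by (intro prod_mono) (use pT in auto)
      thus "1 / dd T \<le> 1 / ph T" using ph_ge1[OF fT pT] by (intro divide_left_mono) auto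
    qed
    have nn1: "0 \<le> (\<Sum>s\<in>{1..Z}. 1 / (real s)^2)" by (intro sum_nonneg) auto
    have nn2: "0 \<le> (\<Sum>T\<in>TT. 1 / dd T)"
      by (intro sum_nonneg) (simp add: dd_def prod_nonneg)
    have nn3: "0 \<le> (\<Sum>i<Z. (1 / real q)^i)" by (intro sum_nonneg) auto
    show ?thesis using a b c nn1 nn2 nn3 by (intro mult_mono) auto
  qed
  finally show ?thesis using h1 by linarith
qed

lemma sieve_ap:
  fixes q k :: nat and x z :: real
  assumes q: "prime q" and x: "x \<ge> 1" and z: "z \<ge> 2"
  shows "real (card {p. prime p \<and> real p \<le> x \<and> [p = 1] (mod q ^ k)})
           \<le> z + 4 * (x / real (q ^ k)) / ln z + 4 * z ^ 6"
proof -
  define m where "m = q ^ k"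
  have m1: "m \<ge> 1" using prime_gt_0_nat[OF q] by (simp add: m_def Suc_le_eq)
  define P where "P = {p. prime p \<and> real p \<le> x \<and> [p = 1] (mod m)}"
  define Z where "Z = nat \<lfloor>z\<rfloor>"
  define N where "N = nat \<lfloor>x\<rfloor>"
  have Zz: "real Z \<le> z" using z unfolding Z_def by linarith
  define PP where "PP = {l. prime l \<and> real l \<le> z \<and> l \<noteq> q}"
  define TT where "TT = {T. T \<subseteq> PP \<and> real (\<Prod>T) \<le> z}"
  have finPP: "finite PP" unfolding PP_def
    by (rule finite_subset[of _ "{..Z}"]) (auto simp: Z_def le_nat_floor)
  have finTT: "finite TT" unfolding TT_def by (rule finite_subset[of _ "Pow PP"]) (use finPP in auto)
  have TTprop: "finite T \<and> (\<forall>l\<in>T. prime l \<and> l \<noteq> q)" if "T \<in> TT" for T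
    using that finPP unfolding TT_def PP_def by (auto intro: finite_subset)
  have TTle: "real (\<Prod>T) \<le> z" if "T \<in> TT" for T using that unfolding TT_def by auto
  have sets: "finite T \<and> (\<forall>l\<in>T. l \<ge> 2)" if "T \<in> TT" for T
    using TTprop[OF that] prime_ge_2_nat by blast
  have down: "S \<in> TT" if "T \<in> TT" "S \<subseteq> T" for S T
  proof -
    have "\<Prod>S \<le> \<Prod>T" using TTprop[OF that(1)] that(2) by (intro prodset_subset_le) auto
    hence "real (\<Prod>S) \<le> real (\<Prod>T)" by (simp only: of_nat_le_iff)
    thus ?thesis using that TTle[OF that(1)] unfolding TT_def by auto
  qed
  have emp: "{} \<in> TT" using z unfolding TT_def by auto
  obtain lam where lam0: "lam {} = 1"
    and lamQ: "(\<Sum>S\<in>TT. \<Sum>T\<in>TT. lam S * lam T / dd (S \<union> T)) = 1 / (\<Sum>T\<in>TT. 1 / ph T)"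
    and lamB: "\<forall>S\<in>TT. \<bar>lam S\<bar> \<le> dd S * card TT"
  proof -
    have "\<exists>lam. lam {} = 1 \<and>
     (\<Sum>S\<in>TT. \<Sum>T\<in>TT. lam S * lam T / dd (S \<union> T)) = 1 / (\<Sum>T\<in>TT. 1 / ph T) \<and>
     (\<forall>S\<in>TT. \<bar>lam S\<bar> \<le> dd S * card TT)"
    proof (rule selberg_weights)
      show "finite TT" by (rule finTT)
      show "{} \<in> TT" by (rule emp)
      fix T assume T: "T \<in> TT"
      show "finite T \<and> (\<forall>l\<in>T. l \<ge> 2)" using T by (rule sets)
      fix S assume "S \<subseteq> T"
      thus "S \<in> TT" using T down by blast
    qed
    thus ?thesis using that by blast
  qed
  have Gl: "(\<Sum>T\<in>TT. 1 / ph T) \<ge> ln z / 4"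
    using G_lower[OF q, of z] z unfolding TT_def PP_def by simp
  have lnz: "ln z > 0" using z by simp
  have Qb: "(\<Sum>S\<in>TT. \<Sum>T\<in>TT. lam S * lam T / dd (S \<union> T)) \<le> 4 / ln z"
  proof -
    have "1 / (\<Sum>T\<in>TT. 1 / ph T) \<le> 1 / (ln z / 4)"
      using Gl lnz by (intro divide_left_mono) auto
    thus ?thesis using lamQ by simp
  qed
  have cardTT: "real (card TT) \<le> z"
  proof -
    have "inj_on (\<lambda>T. \<Prod>T) TT"
    proof (rule inj_onI)
      fix S T assume S: "S \<in> TT" and T: "T \<in> TT" and e: "\<Prod>S = \<Prod>T"
      show "S = T" using TTprop[OF S] TTprop[OF T] e by (intro prodset_inj) auto
    qed
    moreover have "(\<lambda>T. \<Prod>T) ` TT \<subseteq> {1..Z}"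
    proof
      fix n assume "n \<in> (\<lambda>T. \<Prod>T) ` TT"
      then obtain T where T: "T \<in> TT" "n = \<Prod>T" by blast
      have "n \<ge> 1" using T TTprop[OF T(1)] prodset_ge1 by auto
      moreover have "real n \<le> z" using T TTle by auto
      hence "n \<le> Z" unfolding Z_def by (simp add: le_nat_floor)
      ultimately show "n \<in> {1..Z}" by simp
    qed
    ultimately have "card TT \<le> card {1..Z}" using card_inj_on_le by blast
    thus ?thesis using Zz by simp
  qed
  have sumlam: "(\<Sum>S\<in>TT. \<bar>lam S\<bar>) \<le> z ^ 3"
  proof -
    have "(\<Sum>S\<in>TT. \<bar>lam S\<bar>) \<le> (\<Sum>S\<in>TT. z * z)"
    proof (intro sum_mono)
      fix S assume S: "S \<in> TT"
      have "\<bar>lam S\<bar> \<le> dd S * card TT" using lamB S by auto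
      also have "\<dots> \<le> z * z" using TTle[OF S] cardTT z by (intro mult_mono) (auto simp: dd_eq)
      finally show "\<bar>lam S\<bar> \<le> z * z" .
    qed
    also have "\<dots> = real (card TT) * (z * z)" by simp
    also have "\<dots> \<le> z * (z * z)" using cardTT z by (intro mult_right_mono) auto
    finally show ?thesis by (simp add: power3_eq_cube)
  qed
  define P1 where "P1 = {p\<in>P. real p \<le> z}"
  define P2 where "P2 = {p\<in>P. real p > z}"
  have finP: "finite P" unfolding P_def
    by (rule finite_subset[of _ "{..N}"]) (auto simp: N_def le_nat_floor)
  have "P = P1 \<union> P2" unfolding P1_def P2_def by auto
  hence cardP: "card P \<le> card P1 + card P2" by (simp add: card_Un_le)
  have cardP1: "real (card P1) \<le> z"
  proof -
    have "P1 \<subseteq> {1..Z}" unfolding P1_def P_def Z_def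
      by (auto simp: le_nat_floor Suc_le_eq dest: prime_gt_0_nat)
    hence "card P1 \<le> card {1..Z}" by (intro card_mono) auto
    thus ?thesis using Zz by simp
  qed
  define w where "w n = (\<Sum>T\<in>TT. if \<Prod>T dvd n then lam T else 0)" for n :: nat
  have w1: "w p = 1" if p: "p \<in> P2" for p
  proof -
    have pp: "prime p" and pz: "real p > z" using p unfolding P2_def P_def by auto
    have "(if \<Prod>T dvd p then lam T else 0) = (if T = {} then lam T else 0)" if T: "T \<in> TT" for T
    proof (cases "\<Prod>T dvd p")
      case True
      have "\<Prod>T \<noteq> p" using TTle[OF T] pz by auto
      hence "\<Prod>T = 1" using True pp by (auto simp: prime_nat_iff)
      hence "T = {}" using TTprop[OF T] prodset_mem_iff[of T]
        by (metis equals0I nat_dvd_1_iff_1 not_prime_1)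
      thus ?thesis using True by simp
    next
      case False
      hence "T \<noteq> {}" by auto
      thus ?thesis using False by simp
    qed
    hence "w p = (\<Sum>T\<in>TT. if T = {} then lam T else 0)" unfolding w_def by (intro sum.cong) auto
    also have "\<dots> = lam {}" using finTT emp by (simp add: sum.delta')
    finally show ?thesis using lam0 by simp
  qed
  define A where "A = {n\<in>{1..N}. [n = 1] (mod m)}"
  have finA: "finite A" unfolding A_def by auto
  have P2A: "P2 \<subseteq> A" unfolding P2_def P_def A_def N_def
    by (auto simp: le_nat_floor Suc_le_eq dest: prime_gt_0_nat)
  have "real (card P2) = (\<Sum>p\<in>P2. (w p)^2)" using w1 by simp
  also have "\<dots> \<le> (\<Sum>n\<in>A. (w n)^2)" using P2A finA by (intro sum_mono2) auto
  also have "\<dots> = (\<Sum>S\<in>TT. \<Sum>T\<in>TT. lam S * lam T * real (card {n\<in>A. \<Prod>(S \<union> T) dvd n}))"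
  proof -
    have sq: "(w n)^2 = (\<Sum>S\<in>TT. \<Sum>T\<in>TT. if \<Prod>(S \<union> T) dvd n then lam S * lam T else 0)" for n
    proof -
      have "(w n)^2 = (\<Sum>S\<in>TT. \<Sum>T\<in>TT. (if \<Prod>S dvd n then lam S else 0) * (if \<Prod>T dvd n then lam T else 0))"
        unfolding w_def power2_eq_square by (rule sum_product)
      also have "\<dots> = (\<Sum>S\<in>TT. \<Sum>T\<in>TT. if \<Prod>(S \<union> T) dvd n then lam S * lam T else 0)"
      proof (intro sum.cong refl)
        fix S T assume S: "S \<in> TT" and T: "T \<in> TT"
        have "\<Prod>(S \<union> T) dvd n \<longleftrightarrow> (\<forall>l\<in>S \<union> T. l dvd n)"
          using TTprop[OF S] TTprop[OF T] by (intro prodset_dvd_iff) auto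
        also have "\<dots> \<longleftrightarrow> \<Prod>S dvd n \<and> \<Prod>T dvd n"
          using TTprop[OF S] TTprop[OF T] prodset_dvd_iff[of S n] prodset_dvd_iff[of T n] by auto
        finally show "(if \<Prod>S dvd n then lam S else 0) * (if \<Prod>T dvd n then lam T else 0) =
            (if \<Prod>(S \<union> T) dvd n then lam S * lam T else 0)" by auto
      qed
      finally show ?thesis .
    qed
    have "(\<Sum>n\<in>A. (w n)^2) = (\<Sum>n\<in>A. \<Sum>S\<in>TT. \<Sum>T\<in>TT. if \<Prod>(S \<union> T) dvd n then lam S * lam T else 0)"
      using sq by simp
    also have "\<dots> = (\<Sum>S\<in>TT. \<Sum>T\<in>TT. \<Sum>n\<in>A. if \<Prod>(S \<union> T) dvd n then lam S * lam T else 0)"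
      by (subst sum.swap) (subst (2) sum.swap, rule refl)
    also have "\<dots> = (\<Sum>S\<in>TT. \<Sum>T\<in>TT. lam S * lam T * real (card {n\<in>A. \<Prod>(S \<union> T) dvd n}))"
      using finA by (intro sum.cong refl) (simp add: sum.inter_filter[symmetric])
    finally show ?thesis .
  qed
  also have "\<dots> \<le> (\<Sum>S\<in>TT. \<Sum>T\<in>TT. lam S * lam T * (x / (m * dd (S \<union> T))) + 4 * (\<bar>lam S\<bar> * \<bar>lam T\<bar>))"
  proof (intro sum_mono)
    fix S T assume S: "S \<in> TT" and T: "T \<in> TT"
    define l where "l = \<Prod>(S \<union> T)"
    have fU: "finite (S \<union> T)" and pU: "\<forall>l\<in>S \<union> T. prime l \<and> l \<noteq> q" using TTprop[OF S] TTprop[OF T] by auto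
    have l1: "l \<ge> 1" unfolding l_def using fU pU by (intro prodset_ge1) auto
    have "\<not> q dvd l" unfolding l_def using fU pU q prodset_mem_iff[of "S \<union> T" q] by auto
    hence "coprime q l" using q by (simp add: prime_imp_coprime)
    hence cop: "coprime l m" unfolding m_def by (simp add: coprime_commute)
    have eqset: "{n\<in>A. l dvd n} = {n\<in>{1..nat \<lfloor>x\<rfloor>}. [n = 1] (mod m) \<and> l dvd n}"
      unfolding A_def N_def by auto
    have cnt: "\<bar>real (card {n\<in>A. l dvd n}) - x / (m * l)\<bar> \<le> 4"
      unfolding eqset using ap_dvd_count[OF m1 l1 cop] x by simp
    have ddl: "dd (S \<union> T) = real l" unfolding l_def by (rule dd_eq)
    define a where "a = lam S * lam T"
    have "a * real (card {n\<in>A. l dvd n}) \<le> a * (x / (m * l)) + 4 * \<bar>a\<bar>"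
    proof (cases "a \<ge> 0")
      case True
      thus ?thesis using cnt mult_left_mono[of "real (card {n\<in>A. l dvd n})" "x / (m * l) + 4" a]
        by (auto simp: algebra_simps abs_le_iff)
    next
      case False
      thus ?thesis using cnt mult_left_mono_neg[of "x / (m * l) - 4" "real (card {n\<in>A. l dvd n})" a]
        by (auto simp: algebra_simps abs_le_iff)
    qed
    thus "lam S * lam T * real (card {n\<in>A. \<Prod>(S \<union> T) dvd n}) \<le>
          lam S * lam T * (x / (m * dd (S \<union> T))) + 4 * (\<bar>lam S\<bar> * \<bar>lam T\<bar>)"
      unfolding a_def ddl l_def by (simp add: abs_mult)
  qed
  also have "\<dots> = (x / m) * (\<Sum>S\<in>TT. \<Sum>T\<in>TT. lam S * lam T / dd (S \<union> T)) + 4 * (\<Sum>S\<in>TT. \<bar>lam S\<bar>)^2"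
  proof -
    have e1: "(\<Sum>S\<in>TT. \<Sum>T\<in>TT. lam S * lam T * (x / (m * dd (S \<union> T))) + 4 * (\<bar>lam S\<bar> * \<bar>lam T\<bar>))
      = (\<Sum>S\<in>TT. \<Sum>T\<in>TT. lam S * lam T * (x / (m * dd (S \<union> T)))) + (\<Sum>S\<in>TT. \<Sum>T\<in>TT. 4 * (\<bar>lam S\<bar> * \<bar>lam T\<bar>))"
      by (simp only: sum.distrib)
    have e2: "(\<Sum>S\<in>TT. \<Sum>T\<in>TT. lam S * lam T * (x / (m * dd (S \<union> T)))) = (x / m) * (\<Sum>S\<in>TT. \<Sum>T\<in>TT. lam S * lam T / dd (S \<union> T))"
      unfolding sum_distrib_left using m1 by (intro sum.cong refl) (simp add: field_simps)
    have e3: "(\<Sum>S\<in>TT. \<Sum>T\<in>TT. 4 * (\<bar>lam S\<bar> * \<bar>lam T\<bar>)) = 4 * (\<Sum>S\<in>TT. \<bar>lam S\<bar>)^2"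
    proof -
      have "(\<Sum>S\<in>TT. \<bar>lam S\<bar>)^2 = (\<Sum>S\<in>TT. \<Sum>T\<in>TT. \<bar>lam S\<bar> * \<bar>lam T\<bar>)"
        unfolding power2_eq_square by (rule sum_product)
      thus ?thesis by (simp add: sum_distrib_left)
    qed
    show ?thesis unfolding e1 e2 e3 ..
  qed
  also have "\<dots> \<le> (x / m) * (4 / ln z) + 4 * (z ^ 3)^2"
  proof (intro add_mono mult_left_mono)
    show "(\<Sum>S\<in>TT. \<Sum>T\<in>TT. lam S * lam T / dd (S \<union> T)) \<le> 4 / ln z" by (rule Qb)
    show "0 \<le> x / real m" using x by simp
    show "(\<Sum>S\<in>TT. \<bar>lam S\<bar>)^2 \<le> (z ^ 3)^2"
      using sumlam by (intro power_mono) (auto intro: sum_nonneg)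
  qed simp
  finally have c2: "real (card P2) \<le> (x / m) * (4 / ln z) + 4 * z ^ 6" by (simp add: power_mult[symmetric])
  have "real (card P) \<le> real (card P1) + real (card P2)" using cardP by simp
  also have "\<dots> \<le> z + ((x / m) * (4 / ln z) + 4 * z ^ 6)" using cardP1 c2 by (rule add_mono)
  also have "\<dots> = z + 4 * (x / real (q ^ k)) / ln z + 4 * z ^ 6" unfolding m_def by simp
  finally show ?thesis unfolding P_def m_def .
qed

lemma ev_obtain: "eventually P (at_top::real filter) \<Longrightarrow> \<exists>X0. \<forall>X\<ge>X0. P X"
  by (simp add: eventually_at_top_linorder)

lemma sieve_z7:
  fixes q k :: nat and X :: real
  assumes q: "prime q" and X: "X \<ge> 128"
  shows "real (card {p. prime p \<and> real p \<le> X * real (q ^ k) \<and> [p = 1] (mod q ^ k)})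
           \<le> X powr (1/7) + 28 * X / ln X + 4 * X powr (6/7)"
proof -
  define z where "z = X powr (1/7)"
  have z2: "z \<ge> 2"
  proof -
    have "(128::real) powr (1/7) = 2"
    proof -
      have "(128::real) = 2 powr 7" by simp
      hence "(128::real) powr (1/7) = (2 powr 7) powr (1/7)" by simp
      also have "\<dots> = 2" by (simp add: powr_powr)
      finally show ?thesis .
    qed
    moreover have "(128::real) powr (1/7) \<le> X powr (1/7)" using X by (intro powr_mono2) auto
    ultimately show ?thesis by (simp add: z_def)
  qed
  have m: "real (q ^ k) > 0" using prime_gt_0_nat[OF q] by simp
  have x1: "X * real (q ^ k) \<ge> 1"
  proof -
    have "real (q ^ k) \<ge> 1" using prime_gt_0_nat[OF q] by (simp add: Suc_le_eq)
    thus ?thesis using X by (metis dual_order.trans mult_left_mono mult.right_neutral mult_le_cancel_right1 numeral_le_iff one_le_numeral order_less_imp_le order_trans zero_le_one)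
  qed
  have "real (card {p. prime p \<and> real p \<le> X * real (q ^ k) \<and> [p = 1] (mod q ^ k)})
        \<le> z + 4 * (X * real (q ^ k) / real (q ^ k)) / ln z + 4 * z ^ 6"
    by (rule sieve_ap[OF q x1 z2])
  also have "X * real (q ^ k) / real (q ^ k) = X" using m by simp
  also have "ln z = ln X / 7" using X by (simp add: z_def ln_powr)
  also have "z ^ 6 = X powr (6/7)"
  proof -
    have zp: "z > 0" using z2 by simp
    have "z ^ 6 = z powr (real 6)" using zp by (rule powr_realpow[symmetric])
    also have "\<dots> = X powr (1/7 * real 6)" unfolding z_def by (rule powr_powr)
    finally show ?thesis by simp
  qed
  also have "4 * X / (ln X / 7) = 28 * X / ln X" by simp
  finally show ?thesis unfolding z_def .
qed

lemma BT_bound: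
  "\<exists>x0. \<forall>x\<ge>x0. \<forall>q k. prime q \<longrightarrow> real (q ^ k) \<le> x powr (2/3) \<longrightarrow>
     real (card {p. prime p \<and> real p \<le> x \<and> [p = 1] (mod q ^ k)}) \<le> 87 * x / (real (q ^ k) * ln x)"
proof -
  have "eventually (\<lambda>X::real. X powr (1/7) + 4 * X powr (6/7) \<le> X / ln X) at_top" by real_asymp
  then obtain X1 :: real where X1: "\<forall>X\<ge>X1. X powr (1/7) + 4 * X powr (6/7) \<le> X / ln X"
    using ev_obtain by blast
  have ev: "eventually (\<lambda>x::real. x powr (1/3) \<ge> max X1 128 \<and> x \<ge> 2) at_top"
  proof -
    have e1: "eventually (\<lambda>x::real. x powr (1/3) \<ge> X1) at_top" by real_asymp
    have e2: "eventually (\<lambda>x::real. x powr (1/3) \<ge> 128) at_top" by real_asymp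
    have e3: "eventually (\<lambda>x::real. x \<ge> 2) at_top" by real_asymp
    show ?thesis using e1 e2 e3 by eventually_elim auto
  qed
  then obtain x0 where x0: "\<forall>x\<ge>x0. x powr (1/3) \<ge> max X1 128 \<and> x \<ge> 2" using ev_obtain by blast
  show ?thesis
  proof (intro exI[of _ x0] allI impI)
    fix x :: real and q k :: nat
    assume x: "x \<ge> x0" and q: "prime q" and mx: "real (q ^ k) \<le> x powr (2/3)"
    have xb: "x powr (1/3) \<ge> max X1 128" "x \<ge> 2" using x0 x by auto
    define m where "m = real (q ^ k)"
    have m0: "m > 0" using prime_gt_0_nat[OF q] by (simp add: m_def)
    define X where "X = x / m"
    have "x powr (1/3) = x powr (1 - 2/3)" by simp
    also have "\<dots> = x powr 1 / x powr (2/3)" by (rule powr_diff)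
    also have "\<dots> = x / x powr (2/3)" using xb by simp
    also have "\<dots> \<le> X" unfolding X_def using mx m0 xb by (intro divide_left_mono) (auto simp: m_def)
    finally have Xge: "X \<ge> x powr (1/3)" .
    hence X128: "X \<ge> 128" and XX1: "X \<ge> X1" using xb by auto
    have lnX: "ln X \<ge> ln x / 3"
    proof -
      have "ln (x powr (1/3)) \<le> ln X" using Xge xb by (subst ln_le_cancel_iff) auto
      thus ?thesis using xb by (simp add: ln_powr)
    qed
    have eqx: "X * real (q ^ k) = x" using m0 unfolding X_def m_def by simp
    have "real (card {p. prime p \<and> real p \<le> x \<and> [p = 1] (mod q ^ k)})
          \<le> X powr (1/7) + 28 * X / ln X + 4 * X powr (6/7)"
      using sieve_z7[OF q X128, of k] unfolding eqx .
    also have "\<dots> \<le> 29 * X / ln X"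
    proof -
      have a: "X powr (1/7) + 4 * X powr (6/7) \<le> X / ln X" using X1 XX1 by blast
      have b: "28 * X / ln X + X / ln X = 29 * X / ln X" by (simp add: add_divide_distrib[symmetric])
      show ?thesis using a b by linarith
    qed
    also have "\<dots> \<le> 29 * X / (ln x / 3)"
    proof (rule divide_left_mono)
      have lx: "ln x > 0" using xb by simp
      show "ln x / 3 \<le> ln X" by (rule lnX)
      show "0 \<le> 29 * X" using X128 by simp
      show "0 < ln X * (ln x / 3)" using lx lnX by (intro mult_pos_pos) auto
    qed
    also have "\<dots> = 87 * x / (real (q ^ k) * ln x)"
    proof -
      have lx: "ln x > 0" using xb by simp
      show ?thesis unfolding X_def m_def using lx m0 unfolding m_def by (simp add: field_simps)
    qed
    finally show "real (card {p. prime p \<and> real p \<le> x \<and> [p = 1] (mod q ^ k)}) \<le> 87 * x / (real (q ^ k) * ln x)" .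
  qed
qed

lemma finite_nat_le_real: "finite {m::nat. P m \<and> real m \<le> X}"
  by (rule finite_subset[of _ "{..nat \<lfloor>X\<rfloor>}"]) (auto simp: le_nat_floor)

lemma nonprime_pp_card:
  fixes X :: real
  assumes X: "X \<ge> 1"
  shows "real (card {m::nat. primepow m \<and> \<not> prime m \<and> real m \<le> X}) \<le> (sqrt X + 1) * (log 2 X + 1)"
proof -
  define S where "S = nat \<lfloor>sqrt X\<rfloor>"
  define K where "K = nat \<lfloor>log 2 X\<rfloor>"
  have sub: "{m::nat. primepow m \<and> \<not> prime m \<and> real m \<le> X} \<subseteq> (\<lambda>(a, b). a ^ b) ` ({..S} \<times> {..K})"
  proof
    fix m assume m: "m \<in> {m::nat. primepow m \<and> \<not> prime m \<and> real m \<le> X}"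
    then obtain p k where pk: "prime p" "k > 0" "m = p ^ k" unfolding primepow_def by auto
    have "k \<noteq> 1" using m pk by auto
    hence k2: "k \<ge> 2" using pk by auto
    have p2: "p \<ge> 2" using prime_ge_2_nat[OF pk(1)] .
    have mX: "real m \<le> X" using m by auto
    have "p ^ 2 \<le> p ^ k" using k2 p2 by (intro power_increasing) auto
    hence "real p ^ 2 \<le> X" using mX pk(3) by (metis of_nat_le_iff of_nat_power order_trans)
    hence "real p \<le> sqrt X" by (simp add: real_le_rsqrt)
    hence pS: "p \<le> S" unfolding S_def by (simp add: le_nat_floor)
    have "(2::nat) ^ k \<le> p ^ k" using p2 by (intro power_mono) auto
    hence "(2::real) ^ k \<le> X" using mX pk(3) by (metis of_nat_le_iff of_nat_power order_trans of_nat_numeral)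
    hence "log 2 ((2::real) ^ k) \<le> log 2 X" using X by (subst log_le_cancel_iff) auto
    hence "real k \<le> log 2 X" by (simp add: log_nat_power)
    hence kK: "k \<le> K" unfolding K_def by (simp add: le_nat_floor)
    show "m \<in> (\<lambda>(a, b). a ^ b) ` ({..S} \<times> {..K})" using pS kK pk(3) by force
  qed
  have "card {m::nat. primepow m \<and> \<not> prime m \<and> real m \<le> X} \<le> card ((\<lambda>(a, b). a ^ b) ` ({..S} \<times> {..K}))"
    by (rule card_mono[OF _ sub]) simp
  also have "\<dots> \<le> card ({..S} \<times> {..K})" by (rule card_image_le) simp
  also have "\<dots> = (S + 1) * (K + 1)" by simp
  finally have c: "real (card {m::nat. primepow m \<and> \<not> prime m \<and> real m \<le> X}) \<le> (real S + 1) * (real K + 1)"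
    by (metis of_nat_1 of_nat_add of_nat_le_iff of_nat_mult)
  have "real S \<le> sqrt X" unfolding S_def using X by (intro of_nat_floor) simp
  moreover have "real K \<le> log 2 X" unfolding K_def using X by (intro of_nat_floor) simp
  ultimately have "(real S + 1) * (real K + 1) \<le> (sqrt X + 1) * (log 2 X + 1)"
    by (intro mult_mono) auto
  thus ?thesis using c by linarith
qed

lemma pp_count:
  "\<exists>X0. \<forall>X\<ge>X0. real (card {m::nat. primepow m \<and> real m \<le> X}) \<le> 30 * X / ln X"
proof -
  have "eventually (\<lambda>X::real. X powr (1/7) + 4 * X powr (6/7) + (sqrt X + 1) * (log 2 X + 1) \<le> 2 * X / ln X) at_top"
    by real_asymp
  then obtain X1 :: real where X1: "\<forall>X\<ge>X1. X powr (1/7) + 4 * X powr (6/7) + (sqrt X + 1) * (log 2 X + 1) \<le> 2 * X / ln X"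
    using ev_obtain by blast
  show ?thesis
  proof (intro exI[of _ "max X1 128"] allI impI)
    fix X :: real assume X: "X \<ge> max X1 128"
    have "{m::nat. primepow m \<and> real m \<le> X} \<subseteq> {p. prime p \<and> real p \<le> X * real (2 ^ 0) \<and> [p = 1] (mod 2 ^ 0)} \<union>
            {m::nat. primepow m \<and> \<not> prime m \<and> real m \<le> X}" by auto
    have "card {m::nat. primepow m \<and> real m \<le> X} \<le> card {p. prime p \<and> real p \<le> X * real (2 ^ 0) \<and> [p = 1] (mod 2 ^ 0)} +
            card {m::nat. primepow m \<and> \<not> prime m \<and> real m \<le> X}"
    proof -
      note fins = finite_nat_le_real[of "\<lambda>p. prime p \<and> [p = 1] (mod 2 ^ 0)" "X * real (2 ^ 0)"]
                  finite_nat_le_real[of "\<lambda>m. primepow m \<and> \<not> prime m" X]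
      have "finite ({p. prime p \<and> real p \<le> X * real (2 ^ 0) \<and> [p = 1] (mod 2 ^ 0)} \<union>
            {m::nat. primepow m \<and> \<not> prime m \<and> real m \<le> X})" using fins by (simp add: conj_ac)
      from card_mono[OF this \<open>{m::nat. primepow m \<and> real m \<le> X} \<subseteq> _\<close>]
      show ?thesis using card_Un_le order_trans by blast
    qed
    hence "real (card {m::nat. primepow m \<and> real m \<le> X}) \<le> real (card {p. prime p \<and> real p \<le> X * real (2 ^ 0) \<and> [p = 1] (mod 2 ^ 0)}) +
            real (card {m::nat. primepow m \<and> \<not> prime m \<and> real m \<le> X})" by linarith
    also have "\<dots> \<le> (X powr (1/7) + 28 * X / ln X + 4 * X powr (6/7)) + (sqrt X + 1) * (log 2 X + 1)"
      using X by (intro add_mono sieve_z7 nonprime_pp_card) auto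
    also have "\<dots> \<le> 28 * X / ln X + 2 * X / ln X"
    proof -
      have "X \<ge> X1" using X by simp
      with X1 have "X powr (1/7) + 4 * X powr (6/7) + (sqrt X + 1) * (log 2 X + 1) \<le> 2 * X / ln X" by blast
      thus ?thesis by linarith
    qed
    also have "\<dots> = 30 * X / ln X" by (simp add: add_divide_distrib[symmetric])
    finally show "real (card {m::nat. primepow m \<and> real m \<le> X}) \<le> 30 * X / ln X" .
  qed
qed

lemma dyadic:
  "\<exists>T0. \<forall>T\<ge>T0. \<forall>J::nat. (\<Sum>m\<in>{m::nat. primepow m \<and> T < real m \<and> real m \<le> 2 ^ J * T}. 1 / real m) \<le> J * 60 / ln T"
proof -
  obtain X0 where X0: "\<forall>X\<ge>X0. real (card {m::nat. primepow m \<and> real m \<le> X}) \<le> 30 * X / ln X"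
    using pp_count by blast
  show ?thesis
  proof (intro exI[of _ "max X0 2"] allI impI)
    fix T :: real and J :: nat assume T: "T \<ge> max X0 2"
    have lnT: "ln T > 0" using T by simp
    have block: "(\<Sum>m\<in>{m::nat. primepow m \<and> U < real m \<and> real m \<le> 2 * U}. 1 / real m) \<le> 60 / ln T"
      if U: "U \<ge> T" for U
    proof -
      let ?B = "{m::nat. primepow m \<and> U < real m \<and> real m \<le> 2 * U}"
      have finB: "finite ?B" by (rule finite_subset[OF _ finite_nat_le_real[of "\<lambda>m. primepow m" "2 * U"]]) auto
      have U2: "U \<ge> 2" "2 * U \<ge> X0" using U T by auto
      have "(\<Sum>m\<in>?B. 1 / real m) \<le> (\<Sum>m\<in>?B. 1 / U)"
        using U2 by (intro sum_mono divide_left_mono) auto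
      also have "\<dots> = real (card ?B) / U" by simp
      also have "real (card ?B) \<le> real (card {m::nat. primepow m \<and> real m \<le> 2 * U})"
        by (subst of_nat_le_iff, rule card_mono[OF finite_nat_le_real]) auto
      also have "\<dots> \<le> 30 * (2 * U) / ln (2 * U)" using X0 U2 by auto
      also have "30 * (2 * U) / ln (2 * U) / U = 60 / ln (2 * U)" using U2 by (simp add: field_simps)
      also have "\<dots> \<le> 60 / ln T"
      proof -
        have "ln T \<le> ln (2 * U)" using T U by (subst ln_le_cancel_iff) auto
        thus ?thesis using lnT by (intro divide_left_mono) auto
      qed
      finally show ?thesis using U2 by (simp add: divide_right_mono)
    qed
    show "(\<Sum>m\<in>{m::nat. primepow m \<and> T < real m \<and> real m \<le> 2 ^ J * T}. 1 / real m) \<le> J * 60 / ln T"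
    proof (induction J)
      case 0
      have e: "{m::nat. primepow m \<and> T < real m \<and> real m \<le> 2 ^ 0 * T} = {}" by auto
      show ?case by (subst e) simp
    next
      case (Suc J)
      let ?A = "{m::nat. primepow m \<and> T < real m \<and> real m \<le> 2 ^ J * T}"
      let ?B = "{m::nat. primepow m \<and> 2 ^ J * T < real m \<and> real m \<le> 2 * (2 ^ J * T)}"
      have e: "{m::nat. primepow m \<and> T < real m \<and> real m \<le> 2 ^ Suc J * T} = ?A \<union> ?B"
      proof -
        have "T \<le> 2 ^ J * T" using T by (simp add: one_le_power)
        thus ?thesis by auto
      qed
      have finA: "finite ?A" by (rule finite_subset[OF _ finite_nat_le_real[of "\<lambda>m. primepow m" "2 ^ J * T"]]) auto
      have finB: "finite ?B" by (rule finite_subset[OF _ finite_nat_le_real[of "\<lambda>m. primepow m" "2 * (2 ^ J * T)"]]) auto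
      have "(\<Sum>m\<in>?A \<union> ?B. 1 / real m) = (\<Sum>m\<in>?A. 1 / real m) + (\<Sum>m\<in>?B. 1 / real m)"
        by (rule sum.union_disjoint[OF finA finB]) auto
      also have "\<dots> \<le> J * 60 / ln T + 60 / ln T"
        using Suc.IH block[of "2 ^ J * T"] T by (intro add_mono) (auto simp: one_le_power)
      also have "\<dots> = Suc J * 60 / ln T" using lnT by (simp add: field_simps)
      finally show ?case unfolding e .
    qed
  qed
qed

lemma fermat_int:
  fixes n :: int and p :: nat
  assumes p: "prime p" and nd: "\<not> int p dvd n"
  shows "[n ^ (p - 1) = 1] (mod int p)"
proof -
  define b where "b = nat (n mod int p)"
  have pp: "int p > 0" using prime_gt_0_nat[OF p] by simp
  have bi: "int b = n mod int p" unfolding b_def using pp by simp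
  have "\<not> p dvd b"
  proof
    assume "p dvd b"
    hence "int p dvd int b" by simp
    hence "int p dvd n mod int p" using bi by simp
    hence "int p dvd n" by (simp add: dvd_mod_iff)
    thus False using nd by simp
  qed
  hence "[b ^ (p - 1) = 1] (mod p)" using p by (rule fermat_theorem[rotated])
  hence "[int b ^ (p - 1) = 1] (mod int p)" by (metis cong_int_iff of_nat_1 of_nat_power)
  moreover have "[int b = n] (mod int p)" using bi by (simp add: cong_def)
  hence "[int b ^ (p - 1) = n ^ (p - 1)] (mod int p)" by (rule cong_pow)
  ultimately show ?thesis by (meson cong_sym cong_trans)
qed

lemma rat_facts:
  fixes a :: rat
  assumes a: "a \<notin> {-1, 0, 1}" and q: "quotient_of a = (n, d)"
  shows "d > 0" "coprime n d" "n \<noteq> 0" "\<And>j. j > 0 \<Longrightarrow> n ^ j \<noteq> d ^ j"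
proof -
  show d0: "d > 0" using q by (rule quotient_of_denom_pos)
  show cop: "coprime n d" using q by (rule quotient_of_coprime)
  have aeq: "a = of_int n / of_int d" using q by (rule quotient_of_div)
  show "n \<noteq> 0" using a aeq by auto
  fix j :: nat assume j: "j > 0"
  show "n ^ j \<noteq> d ^ j"
  proof
    assume e: "n ^ j = d ^ j"
    hence "\<bar>n\<bar> ^ j = \<bar>d\<bar> ^ j" by (metis power_abs)
    hence "\<bar>n\<bar> = \<bar>d\<bar>" by (rule power_eq_imp_eq_base[OF _ abs_ge_zero abs_ge_zero j])
    hence nd: "\<bar>n\<bar> = d" using d0 by simp
    have "is_unit d"
    proof -
      have "d dvd n" using nd by (metis dvd_abs_iff dvd_refl)
      thus ?thesis using cop by (metis coprime_common_divisor dvd_refl)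
    qed
    hence "d = 1" using d0 by simp
    hence "n = 1 \<or> n = -1" using nd by auto
    thus False using a aeq \<open>d = 1\<close> by auto
  qed
qed

lemma val0_ndvd:
  fixes a :: rat
  assumes q: "quotient_of a = (n, d)" and n0: "n \<noteq> 0" and p: "prime p" and v: "padic_val_rat p a = 0"
  shows "\<not> int p dvd n" "\<not> int p dvd d"
proof -
  have d0: "d > 0" using q by (rule quotient_of_denom_pos)
  have cop: "coprime n d" using q by (rule quotient_of_coprime)
  have pi: "prime (int p)" using p by simp
  have me: "multiplicity (int p) n = multiplicity (int p) d" using v q by (simp add: padic_val_rat_def)
  have notboth: "\<not> (int p dvd n \<and> int p dvd d)"
  proof
    assume "int p dvd n \<and> int p dvd d"
    hence "is_unit (int p)" using cop by (meson coprime_common_divisor)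
    thus False using pi by simp
  qed
  have "int p dvd n \<longleftrightarrow> multiplicity (int p) n > 0" using pi n0 by (simp add: prime_multiplicity_gt_zero_iff)
  moreover have "int p dvd d \<longleftrightarrow> multiplicity (int p) d > 0" using pi d0 by (simp add: prime_multiplicity_gt_zero_iff)
  ultimately show "\<not> int p dvd n" "\<not> int p dvd d" using me notboth by auto
qed

lemma ord_facts:
  fixes a :: rat
  assumes q: "quotient_of a = (n, d)" and p: "prime p" and nn: "\<not> int p dvd n" and nd: "\<not> int p dvd d"
  shows "ord_rat p a \<ge> 1" "[n ^ ord_rat p a = d ^ ord_rat p a] (mod int p)" "ord_rat p a dvd (p - 1)"
proof -
  define k where "k = ord_rat p a"
  have kdef: "k = (LEAST k::nat. k \<ge> 1 \<and> [n ^ k = d ^ k] (mod int p))" unfolding k_def ord_rat_def using q by simp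
  have p1: "p - 1 \<ge> 1" using prime_ge_2_nat[OF p] by simp
  have fn: "[n ^ (p - 1) = 1] (mod int p)" using p nn by (rule fermat_int)
  have fd: "[d ^ (p - 1) = 1] (mod int p)" using p nd by (rule fermat_int)
  have ex: "(p - 1) \<ge> 1 \<and> [n ^ (p - 1) = d ^ (p - 1)] (mod int p)" using p1 fn fd by (meson cong_sym cong_trans)
  have kP: "k \<ge> 1 \<and> [n ^ k = d ^ k] (mod int p)" unfolding kdef by (rule LeastI[of _ "p - 1"]) (rule ex)
  have kmin: "\<And>j. j \<ge> 1 \<and> [n ^ j = d ^ j] (mod int p) \<Longrightarrow> k \<le> j" unfolding kdef by (rule Least_le)
  show "ord_rat p a \<ge> 1" "[n ^ ord_rat p a = d ^ ord_rat p a] (mod int p)" using kP unfolding k_def by auto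
  define t where "t = (p - 1) div k"
  define r where "r = (p - 1) mod k"
  have pr: "p - 1 = k * t + r" unfolding t_def r_def by simp
  have rk: "r < k" unfolding r_def using kP by simp
  have copd: "coprime ((d ^ k) ^ t) (int p)"
  proof -
    have pi: "prime (int p)" using p by simp
    have "coprime (int p) d" using pi nd by (rule prime_imp_coprime)
    hence "coprime d (int p)" by (simp add: coprime_commute)
    thus ?thesis by simp
  qed
  have "[n ^ (k * t + r) = d ^ (k * t + r)] (mod int p)" using ex pr by simp
  moreover have "n ^ (k * t + r) = (n ^ k) ^ t * n ^ r" by (simp add: power_add power_mult)
  moreover have "d ^ (k * t + r) = (d ^ k) ^ t * d ^ r" by (simp add: power_add power_mult)
  moreover have "[(n ^ k) ^ t * n ^ r = (d ^ k) ^ t * n ^ r] (mod int p)"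
  proof -
    have "[(n ^ k) ^ t = (d ^ k) ^ t] (mod int p)" using kP by (simp add: cong_pow)
    thus ?thesis by (rule cong_scalar_right)
  qed
  ultimately have "[(d ^ k) ^ t * n ^ r = (d ^ k) ^ t * d ^ r] (mod int p)" by (metis cong_sym cong_trans)
  hence rr: "[n ^ r = d ^ r] (mod int p)" using copd by (simp add: cong_mult_lcancel)
  have "r = 0"
  proof (rule ccontr)
    assume "r \<noteq> 0"
    hence "k \<le> r" using rr by (intro kmin) auto
    thus False using rk by simp
  qed
  thus "ord_rat p a dvd (p - 1)" unfolding k_def[symmetric] r_def by auto
qed

lemma card_ppf:
  fixes N :: nat
  assumes N: "N \<ge> 1"
  shows "real (card (primepow_factors N)) \<le> ln (real N) / ln 2"
proof -
  have N0: "N \<noteq> 0" using N by simp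
  have fin: "finite {d. d dvd N}" using N0 by simp
  have sub: "primepow_factors N \<subseteq> {d. d dvd N}" by (auto simp: primepow_factors_def)
  have "(\<Sum>d\<in>primepow_factors N. ln 2) \<le> (\<Sum>d\<in>primepow_factors N. (mangoldt d :: real))"
  proof (intro sum_mono)
    fix d assume d: "d \<in> primepow_factors N"
    hence pp: "primepow d" by (simp add: primepow_factors_def)
    have "prime (aprimedivisor d)" using pp by (intro prime_aprimedivisor') (auto dest: primepow_gt_Suc_0)
    hence "real (aprimedivisor d) \<ge> 2" using prime_ge_2_nat by (metis of_nat_le_iff of_nat_numeral)
    hence "ln 2 \<le> ln (real (aprimedivisor d))" by simp
    thus "ln 2 \<le> (mangoldt d :: real)" using pp by (simp add: mangoldt_def)
  qed
  also have "\<dots> \<le> (\<Sum>d | d dvd N. (mangoldt d :: real))"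
    using fin sub by (intro sum_mono2) (auto simp: mangoldt_nonneg)
  also have "\<dots> = ln (real N)" using N0 by (simp add: mangoldt_sum)
  finally have "real (card (primepow_factors N)) * ln 2 \<le> ln (real N)" by simp
  thus ?thesis by (simp add: field_simps)
qed

lemma card_pf:
  fixes N :: nat
  assumes N: "N \<ge> 1"
  shows "real (card (prime_factors N)) \<le> ln (real N) / ln 2"
proof -
  have "prime_factors N \<subseteq> primepow_factors N"
    by (auto simp: primepow_factors_def intro: primepow_prime dest: in_prime_factors_imp_dvd in_prime_factors_imp_prime)
  hence "card (prime_factors N) \<le> card (primepow_factors N)"
    using N by (intro card_mono finite_primepow_factors) auto
  thus ?thesis using card_ppf[OF N] by linarith
qed

lemma pow_add_le:
  fixes a b :: real
  assumes "a \<ge> 0" "b \<ge> 0" "j > 0"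
  shows "a ^ j + b ^ j \<le> (a + b) ^ j"
proof -
  obtain i where j: "j = Suc i" using assms(3) by (cases j) auto
  have "a ^ j = a * a ^ i" "b ^ j = b * b ^ i" "(a + b) ^ j = (a + b) * (a + b) ^ i" using j by auto
  moreover have "a * a ^ i \<le> a * (a + b) ^ i" using assms by (intro mult_left_mono power_mono) auto
  moreover have "b * b ^ i \<le> b * (a + b) ^ i" using assms by (intro mult_left_mono power_mono) auto
  ultimately show ?thesis by (simp add: distrib_right)
qed

lemma small_bound:
  fixes a :: rat and z0 :: real
  assumes a: "a \<notin> {-1, 0, 1}" and q: "quotient_of a = (n, d)" and z0: "z0 \<ge> 0"
  shows "real (card {p. prime p \<and> padic_val_rat p a = 0 \<and> real (ord_rat p a) \<le> z0})
           \<le> z0 ^ 2 * ln (real_of_int (\<bar>n\<bar> + d)) / ln 2"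
    and "finite {p. prime p \<and> padic_val_rat p a = 0 \<and> real (ord_rat p a) \<le> z0}"
proof -
  have d0: "d > 0" and n0: "n \<noteq> 0" and neq: "\<And>j. j > 0 \<Longrightarrow> n ^ j \<noteq> d ^ j" using rat_facts[OF a q] by auto
  define H where "H = real_of_int (\<bar>n\<bar> + d)"
  have H2: "H \<ge> 2" using d0 n0 unfolding H_def by linarith
  define Z0 where "Z0 = nat \<lfloor>z0\<rfloor>"
  have Zz: "real Z0 \<le> z0" unfolding Z0_def using z0 by (intro of_nat_floor) auto
  define Nj where "Nj j = nat \<bar>n ^ j - d ^ j\<bar>" for j :: nat
  have Nj1: "Nj j \<ge> 1" if "j > 0" for j using neq[OF that] unfolding Nj_def by auto
  have lnNj: "ln (real (Nj j)) \<le> real j * ln H" if "j > 0" for j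
  proof -
    have "real (Nj j) = \<bar>real_of_int n ^ j - real_of_int d ^ j\<bar>" unfolding Nj_def by simp
    also have "\<dots> \<le> \<bar>real_of_int n\<bar> ^ j + \<bar>real_of_int d\<bar> ^ j"
      using abs_triangle_ineq4[of "real_of_int n ^ j" "real_of_int d ^ j"] by (simp add: power_abs)
    also have "\<dots> \<le> H ^ j"
    proof -
      have "\<bar>real_of_int n\<bar> ^ j + \<bar>real_of_int d\<bar> ^ j \<le> (\<bar>real_of_int n\<bar> + \<bar>real_of_int d\<bar>) ^ j"
        using that by (intro pow_add_le) auto
      thus ?thesis unfolding H_def using d0 by simp
    qed
    finally have "real (Nj j) \<le> H ^ j" .
    hence "ln (real (Nj j)) \<le> ln (H ^ j)" using Nj1[OF that] by (subst ln_le_cancel_iff) auto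
    also have "\<dots> = real j * ln H" using H2 by (simp add: ln_realpow)
    finally show ?thesis .
  qed
  have sub: "{p. prime p \<and> padic_val_rat p a = 0 \<and> real (ord_rat p a) \<le> z0} \<subseteq> (\<Union>j\<in>{1..Z0}. prime_factors (Nj j))"
  proof
    fix p assume "p \<in> {p. prime p \<and> padic_val_rat p a = 0 \<and> real (ord_rat p a) \<le> z0}"
    hence p: "prime p" and v: "padic_val_rat p a = 0" and oz: "real (ord_rat p a) \<le> z0" by auto
    have nn: "\<not> int p dvd n" and nd: "\<not> int p dvd d" using val0_ndvd[OF q n0 p v] by auto
    define j where "j = ord_rat p a"
    have j1: "j \<ge> 1" and cj: "[n ^ j = d ^ j] (mod int p)" using ord_facts[OF q p nn nd] unfolding j_def by auto
    have jZ: "j \<le> Z0" using oz unfolding j_def Z0_def by (simp add: le_nat_floor)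
    have "int p dvd n ^ j - d ^ j" using cj by (simp add: cong_iff_dvd_diff dvd_diff_commute)
    hence "int p dvd \<bar>n ^ j - d ^ j\<bar>" by simp
    moreover have "int (Nj j) = \<bar>n ^ j - d ^ j\<bar>" unfolding Nj_def by simp
    ultimately have "int p dvd int (Nj j)" by simp
    hence "p dvd Nj j" by simp
    hence "p \<in> prime_factors (Nj j)" using p Nj1[of j] j1 by (auto simp: in_prime_factors_iff)
    thus "p \<in> (\<Union>j\<in>{1..Z0}. prime_factors (Nj j))" using j1 jZ by auto
  qed
  show "finite {p. prime p \<and> padic_val_rat p a = 0 \<and> real (ord_rat p a) \<le> z0}"
    by (rule finite_subset[OF sub]) auto
  have "card {p. prime p \<and> padic_val_rat p a = 0 \<and> real (ord_rat p a) \<le> z0} \<le> card (\<Union>j\<in>{1..Z0}. prime_factors (Nj j))"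
    by (rule card_mono[OF _ sub]) auto
  also have "\<dots> \<le> (\<Sum>j\<in>{1..Z0}. card (prime_factors (Nj j)))" by (rule card_UN_le) simp
  finally have c: "card {p. prime p \<and> padic_val_rat p a = 0 \<and> real (ord_rat p a) \<le> z0}
      \<le> (\<Sum>j\<in>{1..Z0}. card (prime_factors (Nj j)))" .
  have "real (card {p. prime p \<and> padic_val_rat p a = 0 \<and> real (ord_rat p a) \<le> z0})
      \<le> (\<Sum>j\<in>{1..Z0}. real (card (prime_factors (Nj j))))"
    unfolding of_nat_sum[symmetric] of_nat_le_iff by (rule c)
  also have "\<dots> \<le> (\<Sum>j\<in>{1..Z0}. real Z0 * ln H / ln 2)"
  proof (intro sum_mono)
    fix j assume j: "j \<in> {1..Z0}"
    have "real (card (prime_factors (Nj j))) \<le> ln (real (Nj j)) / ln 2" using j by (intro card_pf Nj1) auto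
    also have "\<dots> \<le> real j * ln H / ln 2" using lnNj[of j] j by (intro divide_right_mono) auto
    also have "\<dots> \<le> real Z0 * ln H / ln 2" using j H2 by (intro divide_right_mono mult_right_mono) auto
    finally show "real (card (prime_factors (Nj j))) \<le> real Z0 * ln H / ln 2" .
  qed
  also have "\<dots> = real Z0 * real Z0 * ln H / ln 2" by simp
  also have "\<dots> \<le> z0 * z0 * ln H / ln 2" using Zz H2 by (intro divide_right_mono mult_right_mono mult_mono) auto
  finally show "real (card {p. prime p \<and> padic_val_rat p a = 0 \<and> real (ord_rat p a) \<le> z0})
           \<le> z0 ^ 2 * ln (real_of_int (\<bar>n\<bar> + d)) / ln 2" unfolding H_def by (simp add: power2_eq_square)
qed

lemma double_count:
  assumes "finite M" "finite S"
  shows "(\<Sum>m\<in>M. card {p\<in>S. R m p}) = (\<Sum>p\<in>S. card {m\<in>M. R m p})"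
proof -
  have "(\<Sum>m\<in>M. card {p\<in>S. R m p}) = (\<Sum>m\<in>M. \<Sum>p\<in>{p\<in>S. R m p}. 1::nat)" by simp
  also have "\<dots> = (\<Sum>p\<in>S. \<Sum>m\<in>{m\<in>M. R m p}. 1::nat)" using assms by (rule sum.swap_restrict)
  also have "\<dots> = (\<Sum>p\<in>S. card {m\<in>M. R m p})" by simp
  finally show ?thesis .
qed

lemma p_facts:
  fixes a :: rat
  assumes q: "quotient_of a = (n, d)" and n0: "n \<noteq> 0" and p: "prime p" and v: "padic_val_rat p a = 0"
  shows "ord_rat p a \<ge> 1" "(p - 1) div ord_rat p a \<ge> 1" "(p - 1) div ord_rat p a * ord_rat p a = p - 1"
proof -
  have nn: "\<not> int p dvd n" and nd: "\<not> int p dvd d" using val0_ndvd[OF q n0 p v] by auto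
  note o = ord_facts[OF q p nn nd]
  show "ord_rat p a \<ge> 1" using o by simp
  show e: "(p - 1) div ord_rat p a * ord_rat p a = p - 1" using o by simp
  have "p - 1 \<ge> 1" using prime_ge_2_nat[OF p] by simp
  thus "(p - 1) div ord_rat p a \<ge> 1" using e by (metis mult_0 not_less_eq_eq le_antisym less_one not_le)
qed

theorem proposition4p1:
  fixes a :: rat and B :: real
  assumes "a \<notin> {-1, 0, 1}" and "B \<ge> 0"
  shows "\<exists>C>0. \<exists>x0. \<forall>x\<ge>x0.
    (\<Sum>m\<in>{m::nat. primepow m \<and> sqrt x / (ln x) powr B < real m \<and> real m \<le> x}.
       real (card {p::nat. prime p \<and> real p \<le> x \<and> padic_val_rat p a = 0 \<and>
                          m dvd (p - 1) div ord_rat p a}))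
    \<le> C * (x * ln (ln x) / (ln x)^2)"
proof -
  note a = assms(1) and B = assms(2)
  obtain n d where q: "quotient_of a = (n, d)" by (cases "quotient_of a") auto
  have d0: "d > 0" and n0: "n \<noteq> 0" using rat_facts[OF a q] by auto
  define cH where "cH = ln (real_of_int (\<bar>n\<bar> + d)) / ln 2"
  have cH0: "cH \<ge> 0" unfolding cH_def using d0 n0 by (intro divide_nonneg_pos) auto
  obtain x1 where x1: "\<forall>x\<ge>x1. \<forall>q k. prime q \<longrightarrow> real (q ^ k) \<le> x powr (2/3) \<longrightarrow>
     real (card {p. prime p \<and> real p \<le> x \<and> [p = 1] (mod q ^ k)}) \<le> 87 * x / (real (q ^ k) * ln x)"
    using BT_bound by blast
  obtain T0 where T0: "\<forall>T\<ge>T0. \<forall>J::nat. (\<Sum>m\<in>{m::nat. primepow m \<and> T < real m \<and> real m \<le> 2 ^ J * T}. 1 / real m) \<le> J * 60 / ln T"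
    using dyadic by blast
  define C2 where "C2 = 87 * 180 * ((B + 3) / ln 2 + 1)"
  have ev: "eventually (\<lambda>x::real. sqrt x / ln x powr B \<ge> x powr (1/3) \<and> sqrt x * ln x ^ 3 \<le> x powr (2/3) \<and>
     ln (ln x) \<ge> 1 \<and> cH / ln 2 \<le> ln x ^ 3 * ln (ln x) \<and> x powr (1/3) \<ge> T0 \<and> x \<ge> x1 \<and> ln x \<ge> 2 \<and> x \<ge> 1) at_top"
  proof -
    have e1: "eventually (\<lambda>x::real. sqrt x / ln x powr B \<ge> x powr (1/3)) at_top" using B by real_asymp
    have e2: "eventually (\<lambda>x::real. sqrt x * ln x ^ 3 \<le> x powr (2/3)) at_top" by real_asymp
    have e3: "eventually (\<lambda>x::real. ln (ln x) \<ge> 1) at_top" by real_asymp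
    have e4: "eventually (\<lambda>x::real. cH / ln 2 \<le> ln x ^ 3 * ln (ln x)) at_top" by real_asymp
    have e5: "eventually (\<lambda>x::real. x powr (1/3) \<ge> T0) at_top" by real_asymp
    have e6: "eventually (\<lambda>x::real. x \<ge> x1) at_top" by real_asymp
    have e7: "eventually (\<lambda>x::real. ln x \<ge> 2) at_top" by real_asymp
    have e8: "eventually (\<lambda>x::real. x \<ge> 1) at_top" by real_asymp
    show ?thesis using e1 e2 e3 e4 e5 e6 e7 e8 by eventually_elim auto
  qed
  then obtain x0 where x0: "\<forall>x\<ge>x0. sqrt x / ln x powr B \<ge> x powr (1/3) \<and> sqrt x * ln x ^ 3 \<le> x powr (2/3) \<and>
     ln (ln x) \<ge> 1 \<and> cH / ln 2 \<le> ln x ^ 3 * ln (ln x) \<and> x powr (1/3) \<ge> T0 \<and> x \<ge> x1 \<and> ln x \<ge> 2 \<and> x \<ge> 1"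
    using ev_obtain by blast
  have pos: "C2 + 1 > 0" unfolding C2_def using B by (intro add_pos_pos mult_pos_pos) auto
  have fin: "\<forall>x\<ge>x0.
    (\<Sum>m\<in>{m::nat. primepow m \<and> sqrt x / (ln x) powr B < real m \<and> real m \<le> x}.
       real (card {p::nat. prime p \<and> real p \<le> x \<and> padic_val_rat p a = 0 \<and>
                          m dvd (p - 1) div ord_rat p a}))
    \<le> (C2 + 1) * (x * ln (ln x) / (ln x)^2)"
  proof (intro allI impI)
    fix x :: real assume "x \<ge> x0"
    hence xb: "sqrt x / ln x powr B \<ge> x powr (1/3)" "sqrt x * ln x ^ 3 \<le> x powr (2/3)"
      "ln (ln x) \<ge> 1" "cH / ln 2 \<le> ln x ^ 3 * ln (ln x)" "x powr (1/3) \<ge> T0" "x \<ge> x1" "ln x \<ge> 2" "x \<ge> 1"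
      using x0 by auto
    define L where "L = ln x"
    have L2: "L \<ge> 2" using xb unfolding L_def by simp
    have xpos: "x > 0" using xb(8) by simp
    have lnL: "ln L \<ge> 1" using xb unfolding L_def by simp
    define y where "y = sqrt x / L powr B"
    define z0 where "z0 = sqrt x / L ^ 3"
    define Y where "Y = sqrt x * L ^ 3"
    have sx: "sqrt x > 0" using xpos by simp
    have Lp: "L > 0" using L2 by simp
    have ypos: "y > 0" unfolding y_def using sx Lp by simp
    have z0pos: "z0 > 0" unfolding z0_def using sx Lp by simp
    have Yeq: "x / z0 = Y" unfolding z0_def Y_def using sx Lp xpos by (simp add: field_simps real_sqrt_mult[symmetric])
    have y13: "y \<ge> x powr (1/3)" using xb(1) unfolding y_def L_def .
    have Y23: "Y \<le> x powr (2/3)" using xb(2) unfolding Y_def L_def .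
    have yT0: "y \<ge> T0" using y13 xb(5) by linarith
    have lny: "ln y \<ge> L / 3"
    proof -
      have "ln (x powr (1/3)) \<le> ln y" using y13 ypos xpos by (subst ln_le_cancel_iff) auto
      thus ?thesis using xpos unfolding L_def by (simp add: ln_powr)
    qed
    define M where "M = {m::nat. primepow m \<and> y < real m \<and> real m \<le> x}"
    define P where "P m = {p::nat. prime p \<and> real p \<le> x \<and> padic_val_rat p a = 0 \<and> m dvd (p - 1) div ord_rat p a}" for m
    define Sx where "Sx = {p::nat. prime p \<and> real p \<le> x \<and> padic_val_rat p a = 0 \<and> real (ord_rat p a) \<le> z0}"
    have finM: "finite M" unfolding M_def by (rule finite_subset[OF _ finite_nat_le_real[of "\<lambda>m. primepow m" x]]) auto
    have finP: "finite (P m)" for m unfolding P_def by (rule finite_subset[OF _ finite_nat_le_real[of "\<lambda>p. prime p" x]]) auto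
    have finSx: "finite Sx" unfolding Sx_def by (rule finite_subset[OF _ finite_nat_le_real[of "\<lambda>p. prime p" x]]) auto
    have split: "real (card (P m)) \<le> real (card {p\<in>Sx. m dvd (p - 1) div ord_rat p a}) + real (card {p\<in>P m. z0 < real (ord_rat p a)})" for m
    proof -
      have "P m = {p\<in>Sx. m dvd (p - 1) div ord_rat p a} \<union> {p\<in>P m. z0 < real (ord_rat p a)}"
        unfolding P_def Sx_def by auto
      hence "card (P m) \<le> card {p\<in>Sx. m dvd (p - 1) div ord_rat p a} + card {p\<in>P m. z0 < real (ord_rat p a)}"
        by (metis card_Un_le)
      thus ?thesis by linarith
    qed
    have part1: "(\<Sum>m\<in>M. real (card {p\<in>Sx. m dvd (p - 1) div ord_rat p a})) \<le> real (card Sx) * (L / ln 2)"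
    proof -
      have "(\<Sum>m\<in>M. real (card {p\<in>Sx. m dvd (p - 1) div ord_rat p a})) = real (\<Sum>m\<in>M. card {p\<in>Sx. m dvd (p - 1) div ord_rat p a})"
        by simp
      also have "(\<Sum>m\<in>M. card {p\<in>Sx. m dvd (p - 1) div ord_rat p a}) = (\<Sum>p\<in>Sx. card {m\<in>M. m dvd (p - 1) div ord_rat p a})"
        by (rule double_count[OF finM finSx])
      also have "real \<dots> = (\<Sum>p\<in>Sx. real (card {m\<in>M. m dvd (p - 1) div ord_rat p a}))" by simp
      also have "\<dots> \<le> (\<Sum>p\<in>Sx. L / ln 2)"
      proof (intro sum_mono)
        fix p assume p: "p \<in> Sx"
        hence pp: "prime p" and v: "padic_val_rat p a = 0" and px: "real p \<le> x" unfolding Sx_def by auto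
        define N where "N = (p - 1) div ord_rat p a"
        have N1: "N \<ge> 1" unfolding N_def using p_facts[OF q n0 pp v] by auto
        have "N \<le> p" unfolding N_def by (meson div_le_dividend diff_le_self order_trans)
        hence Nx: "real N \<le> x" using px by linarith
        have "{m\<in>M. m dvd N} \<subseteq> primepow_factors N" unfolding M_def primepow_factors_def by auto
        hence "card {m\<in>M. m dvd N} \<le> card (primepow_factors N)"
          using N1 by (intro card_mono finite_primepow_factors) auto
        hence "real (card {m\<in>M. m dvd N}) \<le> ln (real N) / ln 2" using card_ppf[OF N1] by linarith
        also have "\<dots> \<le> L / ln 2" unfolding L_def using N1 Nx by (intro divide_right_mono) auto
        finally show "real (card {m\<in>M. m dvd (p - 1) div ord_rat p a}) \<le> L / ln 2" unfolding N_def .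
      qed
      also have "\<dots> = real (card Sx) * (L / ln 2)" by simp
      finally show ?thesis .
    qed
    have cardSx: "real (card Sx) \<le> z0 ^ 2 * cH"
    proof -
      note sb = small_bound[OF a q, of z0]
      have "Sx \<subseteq> {p. prime p \<and> padic_val_rat p a = 0 \<and> real (ord_rat p a) \<le> z0}" unfolding Sx_def by auto
      hence "card Sx \<le> card {p. prime p \<and> padic_val_rat p a = 0 \<and> real (ord_rat p a) \<le> z0}"
        using sb(2) z0pos by (intro card_mono) auto
      hence "real (card Sx) \<le> real (card {p. prime p \<and> padic_val_rat p a = 0 \<and> real (ord_rat p a) \<le> z0})" by simp
      also have "\<dots> \<le> z0 ^ 2 * ln (real_of_int (\<bar>n\<bar> + d)) / ln 2" using sb(1) z0pos by simp
      finally show ?thesis unfolding cH_def by simp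
    qed
    have part1': "real (card Sx) * (L / ln 2) \<le> x * ln L / L ^ 2"
    proof -
      have "real (card Sx) * (L / ln 2) \<le> z0 ^ 2 * cH * (L / ln 2)" using cardSx Lp by (intro mult_right_mono) auto
      also have "z0 ^ 2 = x / L ^ 6" unfolding z0_def using xpos by (simp add: power_divide)
      also have "x / L ^ 6 * cH * (L / ln 2) = (x / L ^ 5) * (cH / ln 2)" using Lp by (simp add: field_simps power_eq_if)
      also have "\<dots> \<le> (x / L ^ 5) * (L ^ 3 * ln L)" using xb(4) xpos Lp unfolding L_def by (intro mult_left_mono) auto
      also have "\<dots> = x * ln L / L ^ 2" using Lp by (simp add: field_simps power_eq_if)
      finally show ?thesis .
    qed
    have part2m: "real (card {p\<in>P m. z0 < real (ord_rat p a)}) \<le> (if real m < Y then 87 * x / (real m * L) else 0)"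
      if m: "m \<in> M" for m
    proof -
      have bound: "real m < Y" if pin: "p \<in> {p\<in>P m. z0 < real (ord_rat p a)}" for p
      proof -
        from pin have pp: "prime p" and v: "padic_val_rat p a = 0" and px: "real p \<le> x"
          and dv: "m dvd (p - 1) div ord_rat p a" and oz: "z0 < real (ord_rat p a)" unfolding P_def by auto
        note pf = p_facts[OF q n0 pp v]
        have "m \<le> (p - 1) div ord_rat p a" using dv pf(2) by (intro dvd_imp_le) auto
        hence "m * ord_rat p a \<le> (p - 1) div ord_rat p a * ord_rat p a" by (rule mult_le_mono1)
        hence "m * ord_rat p a \<le> p - 1" using pf(3) by linarith
        hence "real (m * ord_rat p a) \<le> real (p - 1)" by (simp only: of_nat_le_iff)
        moreover have "real (p - 1) = real p - 1" using prime_ge_2_nat[OF pp] by (simp add: of_nat_diff)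
        ultimately have "real m * real (ord_rat p a) < x" using px by simp
        moreover have op: "real (ord_rat p a) > 0" using oz z0pos by linarith
        ultimately have "real m < x / real (ord_rat p a)" by (simp add: field_simps)
        also have "x / real (ord_rat p a) \<le> x / z0" using oz z0pos xpos by (intro divide_left_mono) auto
        finally show ?thesis using Yeq by simp
      qed
      show ?thesis
      proof (cases "real m < Y")
        case False
        hence e: "{p\<in>P m. z0 < real (ord_rat p a)} = {}" using bound by force
        show ?thesis using False unfolding e by simp
      next
        case True
        obtain q' k where qk: "prime q'" "k > 0" "m = q' ^ k" using m unfolding M_def primepow_def by auto
        have sub: "{p\<in>P m. z0 < real (ord_rat p a)} \<subseteq> {p. prime p \<and> real p \<le> x \<and> [p = 1] (mod q' ^ k)}"
        proof
          fix p assume pin: "p \<in> {p\<in>P m. z0 < real (ord_rat p a)}"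
          from pin have pp: "prime p" and v: "padic_val_rat p a = 0" and px: "real p \<le> x"
            and dv: "m dvd (p - 1) div ord_rat p a" unfolding P_def by auto
          note pf = p_facts[OF q n0 pp v]
          have "(p - 1) div ord_rat p a dvd p - 1" using pf(3) by (metis dvd_triv_left)
          hence "m dvd p - 1" using dv by (metis dvd_trans)
          hence "[p = 1] (mod m)" using prime_ge_2_nat[OF pp] by (subst cong_altdef_nat) auto
          thus "p \<in> {p. prime p \<and> real p \<le> x \<and> [p = 1] (mod q' ^ k)}" using pp px qk by auto
        qed
        have fin2: "finite {p. prime p \<and> real p \<le> x \<and> [p = 1] (mod q' ^ k)}"
          by (rule finite_subset[OF _ finite_nat_le_real[of "\<lambda>p. prime p" x]]) auto
        have "real (card {p\<in>P m. z0 < real (ord_rat p a)}) \<le> real (card {p. prime p \<and> real p \<le> x \<and> [p = 1] (mod q' ^ k)})"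
          using card_mono[OF fin2 sub] by simp
        also have "\<dots> \<le> 87 * x / (real (q' ^ k) * ln x)"
        proof -
          have "real (q' ^ k) \<le> x powr (2/3)" using True Y23 qk by simp
          thus ?thesis using x1 xb(6) qk(1) by blast
        qed
        finally show ?thesis using True qk unfolding L_def by simp
      qed
    qed
    define J where "J = nat \<lceil>log 2 (Y / y)\<rceil>"
    define M' where "M' = {m::nat. primepow m \<and> y < real m \<and> real m \<le> 2 ^ J * y}"
    have L3: "L ^ 3 = L powr 3" using Lp by (simp add: powr_realpow)
    have YyL: "Y / y = L powr (B + 3)"
    proof -
      have LB: "L powr B > 0" using Lp by simp
      have "Y / y = L ^ 3 * L powr B" unfolding Y_def y_def using sx LB by (simp add: field_simps)
      also have "\<dots> = L powr 3 * L powr B" by (simp only: L3)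
      also have "\<dots> = L powr (B + 3)" by (simp add: powr_add[symmetric] add.commute)
      finally show ?thesis .
    qed
    have Yy1: "Y / y \<ge> 1" unfolding YyL using L2 B by (intro ge_one_powr_ge_zero) auto
    have logpos: "log 2 (Y / y) \<ge> 0" using Yy1 by simp
    have Jge: "real J \<ge> log 2 (Y / y)" unfolding J_def using logpos by linarith
    have Jle: "real J \<le> log 2 (Y / y) + 1" unfolding J_def using logpos by linarith
    have J2: "Y \<le> 2 ^ J * y"
    proof -
      have "Y / y = 2 powr (log 2 (Y / y))" using Yy1 by simp
      also have "\<dots> \<le> 2 powr (real J)" using Jge by (intro powr_mono) auto
      also have "\<dots> = 2 ^ J" by (simp add: powr_realpow)
      finally show ?thesis using ypos by (simp add: field_simps)
    qed
    have logeq: "log 2 (Y / y) = (B + 3) * ln L / ln 2"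
      unfolding YyL using Lp by (simp add: log_powr log_def)
    define K where "K = (B + 3) / ln 2 + 1"
    have Kpos: "K > 0" unfolding K_def using B by (intro add_pos_pos) auto
    have Jb: "real J \<le> K * ln L"
    proof -
      have "real J \<le> (B + 3) / ln 2 * ln L + 1" using Jle logeq by simp
      also have "\<dots> \<le> (B + 3) / ln 2 * ln L + ln L" using lnL by simp
      finally show ?thesis unfolding K_def by (simp add: algebra_simps)
    qed
    have finM': "finite M'" unfolding M'_def
      by (rule finite_subset[OF _ finite_nat_le_real[of "\<lambda>m. primepow m" "2 ^ J * y"]]) auto
    have part2: "(\<Sum>m\<in>M. real (card {p\<in>P m. z0 < real (ord_rat p a)})) \<le> C2 * (x * ln L / L ^ 2)"
    proof -
      have "(\<Sum>m\<in>M. real (card {p\<in>P m. z0 < real (ord_rat p a)})) \<le> (\<Sum>m\<in>M. if real m < Y then 87 * x / (real m * L) else 0)"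
        by (intro sum_mono part2m)
      also have "\<dots> = (\<Sum>m\<in>{m\<in>M. real m < Y}. 87 * x / (real m * L))"
        using finM by (simp add: sum.inter_filter)
      also have "\<dots> \<le> (\<Sum>m\<in>M'. 87 * x / (real m * L))"
      proof (rule sum_mono2[OF finM'])
        show "{m\<in>M. real m < Y} \<subseteq> M'" unfolding M_def M'_def using J2 by auto
        show "0 \<le> 87 * x / (real m * L)" for m using xpos Lp by simp
      qed
      also have "\<dots> = (\<Sum>m\<in>M'. 87 * x / L * (1 / real m))"
        by (intro sum.cong refl) simp
      also have "\<dots> = 87 * x / L * (\<Sum>m\<in>M'. 1 / real m)"
        by (rule sum_distrib_left[symmetric])
      also have "\<dots> \<le> 87 * x / L * (real J * 60 / ln y)"
      proof (rule mult_left_mono)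
        show "(\<Sum>m\<in>M'. 1 / real m) \<le> real J * 60 / ln y" unfolding M'_def using T0[rule_format, OF yT0, of J] by simp
        show "0 \<le> 87 * x / L" using xpos Lp by simp
      qed
      also have "\<dots> \<le> 87 * x / L * (K * ln L * 60 / (L / 3))"
      proof (rule mult_left_mono)
        have lnyp: "ln y > 0" using lny Lp by linarith
        have "real J * 60 / ln y \<le> K * ln L * 60 / ln y" using Jb lnyp by (intro divide_right_mono) auto
        also have "\<dots> \<le> K * ln L * 60 / (L / 3)" using lny lnyp Lp Kpos lnL L2
          by (intro divide_left_mono mult_nonneg_nonneg mult_pos_pos) auto
        finally show "real J * 60 / ln y \<le> K * ln L * 60 / (L / 3)" .
        show "0 \<le> 87 * x / L" using xpos Lp by simp
      qed
      also have "\<dots> = C2 * (x * ln L / L ^ 2)" unfolding C2_def K_def using Lp by (simp add: field_simps power2_eq_square)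
      finally show ?thesis .
    qed
    have main: "(\<Sum>m\<in>M. real (card (P m))) \<le> (C2 + 1) * (x * ln L / L ^ 2)"
    proof -
      have "(\<Sum>m\<in>M. real (card (P m))) \<le> (\<Sum>m\<in>M. real (card {p\<in>Sx. m dvd (p - 1) div ord_rat p a}) + real (card {p\<in>P m. z0 < real (ord_rat p a)}))"
        by (intro sum_mono split)
      also have "\<dots> = (\<Sum>m\<in>M. real (card {p\<in>Sx. m dvd (p - 1) div ord_rat p a})) + (\<Sum>m\<in>M. real (card {p\<in>P m. z0 < real (ord_rat p a)}))"
        by (rule sum.distrib)
      also have "\<dots> \<le> x * ln L / L ^ 2 + C2 * (x * ln L / L ^ 2)"
        using part1 part1' part2 by linarith
      also have "\<dots> = (C2 + 1) * (x * ln L / L ^ 2)" by (simp only: distrib_right mult_1 add.commute)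
      finally show ?thesis .
    qed
    show "(\<Sum>m\<in>{m::nat. primepow m \<and> sqrt x / (ln x) powr B < real m \<and> real m \<le> x}.
       real (card {p::nat. prime p \<and> real p \<le> x \<and> padic_val_rat p a = 0 \<and>
                          m dvd (p - 1) div ord_rat p a}))
      \<le> (C2 + 1) * (x * ln (ln x) / (ln x)^2)"
      using main by (simp only: M_def P_def y_def L_def)
  qed
  show ?thesis using pos fin by blast
qed

end
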